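(* Let $q_1,q_2,q_3\in(0,1)$ with $q_1+q_2+q_3=1$. On $\mathbb{C}^3$ with basis $\{|0\rangle,|1\rangle,|2\rangle\}$ define the unitaries $L_1=|0\rangle\langle0|+|1\rangle\langle1|+|2\rangle\langle2|$, $L_2=|1\rangle\langle0|+|2\rangle\langle1|+|0\rangle\langle2|$, $L_3=-|0\rangle\langle0|+|1\rangle\langle1|+|2\rangle\langle2|$, $S_1=|2\rangle\langle0|+|0\rangle\langle1|+|1\rangle\langle2|$, $S_2=-|1\rangle\langle0|+|2\rangle\langle1|+|0\rangle\langle2|$, $S_3=-|2\rangle\langle0|+|0\rangle\langle1|+|1\rangle\langle2|$, and the noisy unitary channels $\mathcal{L}(\rho)=\sum_{k=1}^3 q_kL_k\rho L_k^\dagger$ and $\mathcal{S}(\rho)=\sum_{k=1}^3 q_kS_k\rho S_k^\dagger$. Then the optimal probe for discriminating $\mathcal{L}$ and $\mathcal{S}$ is a non-maximally entangled state: the maximum of the success probability over all probes is attained by a non-maximally entangled pure state of $\mathbb{C}^3\otimes\mathbb{C}^3$.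
   Context: For two channels chosen with equal priors $1/2$, the single-shot success probability with a single-system probe $\rho$ is $\frac12+\frac14\|\mathcal{N}_1(\rho)-\mathcal{N}_2(\rho)\|_1$, and with a bipartite probe $\rho_{AB}$ on $\mathbb{C}^3\otimes\mathbb{C}^{d'}$ (channel acting on $A$) it is $\frac12+\frac14\|(\mathcal{N}_1\otimes\mathrm{id})(\rho_{AB})-(\mathcal{N}_2\otimes\mathrm{id})(\rho_{AB})\|_1$; $\|\cdot\|_1$ is the trace norm. The optimal probe maximizes this over all single-system and bipartite probes. A pure state on $\mathbb{C}^3\otimes\mathbb{C}^3$ is maximally entangled if its reduced states are $\mathbb{I}_3/3$; non-maximally entangled means entangled but not maximally entangled. *)

theory Defs
  imports "Jordan_Normal_Form.Schur_Decomposition"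
begin

(* Conventions: C^n is represented by complex vec of dimension n, operators by complex n x n mat.
   The tensor product C^m (x) C^n uses the Kronecker convention |i>|j> ~ basis index i*n+j. *)

definition kron :: "complex mat \<Rightarrow> complex mat \<Rightarrow> complex mat" where
  "kron A B = mat (dim_row A * dim_row B) (dim_col A * dim_col B)
     (\<lambda>(i,j). A $$ (i div dim_row B, j div dim_col B) * B $$ (i mod dim_row B, j mod dim_col B))"

definition mtrace :: "complex mat \<Rightarrow> complex" where
  "mtrace A = (\<Sum>i<dim_row A. A $$ (i,i))"

definition hermitian_mat :: "complex mat \<Rightarrow> bool" where
  "hermitian_mat A \<longleftrightarrow> mat_adjoint A = A"

definition psd_mat :: "nat \<Rightarrow> complex mat \<Rightarrow> bool" where
  "psd_mat n A \<longleftrightarrow> A \<in> carrier_mat n n \<and> hermitian_mat A \<and>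
     (\<forall>v \<in> carrier_vec n. 0 \<le> Re (conjugate v \<bullet> (A *\<^sub>v v)))"

definition density_mat :: "nat \<Rightarrow> complex mat \<Rightarrow> bool" where
  "density_mat n \<rho> \<longleftrightarrow> psd_mat n \<rho> \<and> mtrace \<rho> = 1"

definition psd_sqrt :: "complex mat \<Rightarrow> complex mat" where
  "psd_sqrt M = (THE P. psd_mat (dim_row M) P \<and> P * P = M)"

definition trace_norm :: "complex mat \<Rightarrow> real" where
  "trace_norm X = Re (mtrace (psd_sqrt (mat_adjoint X * X)))"

definition noisy3 :: "real \<Rightarrow> real \<Rightarrow> real \<Rightarrow> complex mat \<Rightarrow> complex mat \<Rightarrow> complex mat
    \<Rightarrow> complex mat \<Rightarrow> complex mat" where
  "noisy3 q1 q2 q3 K1 K2 K3 \<rho> =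
     complex_of_real q1 \<cdot>\<^sub>m (K1 * \<rho> * mat_adjoint K1)
   + complex_of_real q2 \<cdot>\<^sub>m (K2 * \<rho> * mat_adjoint K2)
   + complex_of_real q3 \<cdot>\<^sub>m (K3 * \<rho> * mat_adjoint K3)"

definition L1 :: "complex mat" where "L1 = mat_of_rows_list 3 [[1,0,0],[0,1,0],[0,0,1]]"
definition L2 :: "complex mat" where "L2 = mat_of_rows_list 3 [[0,0,1],[1,0,0],[0,1,0]]"
definition L3 :: "complex mat" where "L3 = mat_of_rows_list 3 [[-1,0,0],[0,1,0],[0,0,1]]"
definition S1 :: "complex mat" where "S1 = mat_of_rows_list 3 [[0,1,0],[0,0,1],[1,0,0]]"
definition S2 :: "complex mat" where "S2 = mat_of_rows_list 3 [[0,0,1],[-1,0,0],[0,1,0]]"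
definition S3 :: "complex mat" where "S3 = mat_of_rows_list 3 [[0,1,0],[0,0,1],[-1,0,0]]"

definition chanL :: "real \<Rightarrow> real \<Rightarrow> real \<Rightarrow> complex mat \<Rightarrow> complex mat" where
  "chanL q1 q2 q3 = noisy3 q1 q2 q3 L1 L2 L3"
definition chanS :: "real \<Rightarrow> real \<Rightarrow> real \<Rightarrow> complex mat \<Rightarrow> complex mat" where
  "chanS q1 q2 q3 = noisy3 q1 q2 q3 S1 S2 S3"

definition chanL_ext :: "real \<Rightarrow> real \<Rightarrow> real \<Rightarrow> nat \<Rightarrow> complex mat \<Rightarrow> complex mat" where
  "chanL_ext q1 q2 q3 d = noisy3 q1 q2 q3 (kron L1 (1\<^sub>m d)) (kron L2 (1\<^sub>m d)) (kron L3 (1\<^sub>m d))"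
definition chanS_ext :: "real \<Rightarrow> real \<Rightarrow> real \<Rightarrow> nat \<Rightarrow> complex mat \<Rightarrow> complex mat" where
  "chanS_ext q1 q2 q3 d = noisy3 q1 q2 q3 (kron S1 (1\<^sub>m d)) (kron S2 (1\<^sub>m d)) (kron S3 (1\<^sub>m d))"

text \<open>Success probabilities (equal priors).\<close>
definition psucc_single :: "real \<Rightarrow> real \<Rightarrow> real \<Rightarrow> complex mat \<Rightarrow> real" where
  "psucc_single q1 q2 q3 \<rho> = 1/2 + 1/4 * trace_norm (chanL q1 q2 q3 \<rho> - chanS q1 q2 q3 \<rho>)"
definition psucc_bip :: "real \<Rightarrow> real \<Rightarrow> real \<Rightarrow> nat \<Rightarrow> complex mat \<Rightarrow> real" where
  "psucc_bip q1 q2 q3 d \<rho> = 1/2 + 1/4 * trace_norm (chanL_ext q1 q2 q3 d \<rho> - chanS_ext q1 q2 q3 d \<rho>)"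

definition normalized_vec :: "nat \<Rightarrow> complex vec \<Rightarrow> bool" where
  "normalized_vec n \<psi> \<longleftrightarrow> \<psi> \<in> carrier_vec n \<and> (\<Sum>i<n. (cmod (\<psi> $ i))\<^sup>2) = 1"

definition proj :: "complex vec \<Rightarrow> complex mat" where
  "proj \<psi> = mat (dim_vec \<psi>) (dim_vec \<psi>) (\<lambda>(i,j). \<psi> $ i * cnj (\<psi> $ j))"

definition product_vec33 :: "complex vec \<Rightarrow> bool" where
  "product_vec33 \<psi> \<longleftrightarrow> (\<exists>a b. a \<in> carrier_vec 3 \<and> b \<in> carrier_vec 3 \<and>
      \<psi> = vec 9 (\<lambda>k. a $ (k div 3) * b $ (k mod 3)))"

definition ptrace_B :: "nat \<Rightarrow> nat \<Rightarrow> complex mat \<Rightarrow> complex mat" where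
  "ptrace_B dA dB \<rho> = mat dA dA (\<lambda>(i,j). \<Sum>k<dB. \<rho> $$ (i*dB+k, j*dB+k))"
definition ptrace_A :: "nat \<Rightarrow> nat \<Rightarrow> complex mat \<Rightarrow> complex mat" where
  "ptrace_A dA dB \<rho> = mat dB dB (\<lambda>(i,j). \<Sum>k<dA. \<rho> $$ (k*dB+i, k*dB+j))"

definition entangled_pure33 :: "complex vec \<Rightarrow> bool" where
  "entangled_pure33 \<psi> \<longleftrightarrow> normalized_vec 9 \<psi> \<and> \<not> product_vec33 \<psi>"

definition max_entangled33 :: "complex vec \<Rightarrow> bool" where
  "max_entangled33 \<psi> \<longleftrightarrow> normalized_vec 9 \<psi> \<and>
     ptrace_B 3 3 (proj \<psi>) = (1/3) \<cdot>\<^sub>m 1\<^sub>m 3 \<and> ptrace_A 3 3 (proj \<psi>) = (1/3) \<cdot>\<^sub>m 1\<^sub>m 3"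

end

theory Submission
  imports Defs
begin


abbreviation adj :: "complex mat \<Rightarrow> complex mat" where "adj \<equiv> mat_adjoint"

lemma adj_dims[simp]: "dim_row (adj A) = dim_col A" "dim_col (adj A) = dim_row A"
  unfolding mat_adjoint_def by auto

lemma adj_carrier[simp]: "A \<in> carrier_mat n m \<Longrightarrow> adj A \<in> carrier_mat m n"
  unfolding carrier_mat_def by simp

lemma adj_index[simp]: "i < dim_col A \<Longrightarrow> j < dim_row A \<Longrightarrow> adj A $$ (i,j) = cnj (A $$ (j,i))"
  unfolding mat_adjoint_def by (simp add: mat_of_rows_index)

lemma adj_adj[simp]: "adj (adj A) = A"
  by (rule eq_matI) auto

lemma adj_mult: assumes "A \<in> carrier_mat n k" "B \<in> carrier_mat k m"
  shows "adj (A * B) = adj B * adj A"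
proof (rule eq_matI)
  fix i j assume "i < dim_row (adj B * adj A)" "j < dim_col (adj B * adj A)"
  then show "adj (A * B) $$ (i, j) = (adj B * adj A) $$ (i, j)"
    using assms by (auto simp: scalar_prod_def row_def col_def intro!: sum.cong)
qed (use assms in auto)

lemma adj_one[simp]: "adj (1\<^sub>m n) = 1\<^sub>m n"
  by (rule eq_matI) auto

lemma adj_add: assumes "A \<in> carrier_mat n m" "B \<in> carrier_mat n m"
  shows "adj (A + B) = adj A + adj B"
  by (rule eq_matI) (use assms in auto)

lemma adj_minus: assumes "A \<in> carrier_mat n m" "B \<in> carrier_mat n m"
  shows "adj (A - B) = adj A - adj B"
  by (rule eq_matI) (use assms in auto)

lemma adj_smult: "adj (c \<cdot>\<^sub>m A) = cnj c \<cdot>\<^sub>m adj A"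
  by (rule eq_matI) auto

lemma mtrace_mult_comm: assumes "A \<in> carrier_mat n m" "B \<in> carrier_mat m n"
  shows "mtrace (A * B) = mtrace (B * A)"
proof -
  have "mtrace (A * B) = (\<Sum>i<n. \<Sum>k<m. A $$ (i,k) * B $$ (k,i))"
    using assms by (auto simp: mtrace_def scalar_prod_def row_def col_def atLeast0LessThan)
  also have "\<dots> = (\<Sum>k<m. \<Sum>i<n. B $$ (k,i) * A $$ (i,k))"
    by (subst sum.swap) (simp add: mult.commute)
  also have "\<dots> = mtrace (B * A)"
    using assms by (auto simp: mtrace_def scalar_prod_def row_def col_def atLeast0LessThan)
  finally show ?thesis .
qed

lemma mtrace_add: assumes "A \<in> carrier_mat n n" "B \<in> carrier_mat n n"
  shows "mtrace (A + B) = mtrace A + mtrace B"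
  using assms by (auto simp: mtrace_def sum.distrib)

lemma mtrace_minus: assumes "A \<in> carrier_mat n n" "B \<in> carrier_mat n n"
  shows "mtrace (A - B) = mtrace A - mtrace B"
  using assms by (auto simp: mtrace_def sum_subtractf)

lemma mtrace_smult: "A \<in> carrier_mat n n \<Longrightarrow> mtrace (c \<cdot>\<^sub>m A) = c * mtrace A"
  by (auto simp: mtrace_def sum_distrib_left)

lemma inner_adj: assumes "B \<in> carrier_mat m n" "x \<in> carrier_vec n" "y \<in> carrier_vec m"
  shows "conjugate x \<bullet> (adj B *\<^sub>v y) = conjugate (B *\<^sub>v x) \<bullet> y"
proof -
  have "conjugate x \<bullet> (adj B *\<^sub>v y) = (\<Sum>i<n. cnj (x $ i) * (\<Sum>j<m. cnj (B $$ (j,i)) * y $ j))"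
    using assms by (auto simp: scalar_prod_def row_def atLeast0LessThan intro!: sum.cong)
  also have "\<dots> = (\<Sum>i<n. \<Sum>j<m. cnj (x $ i) * cnj (B $$ (j,i)) * y $ j)"
    by (simp add: sum_distrib_left mult.assoc)
  also have "\<dots> = (\<Sum>j<m. \<Sum>i<n. cnj (x $ i) * cnj (B $$ (j,i)) * y $ j)"
    by (rule sum.swap)
  also have "\<dots> = (\<Sum>j<m. cnj (\<Sum>i<n. B $$ (j,i) * x $ i) * y $ j)"
    unfolding cnj_sum sum_distrib_right
    by (intro sum.cong refl) (simp add: mult.commute)
  also have "\<dots> = conjugate (B *\<^sub>v x) \<bullet> y"
    using assms by (auto simp: scalar_prod_def row_def atLeast0LessThan intro!: sum.cong)
  finally show ?thesis .
qed




definition ext1 :: "complex \<Rightarrow> complex mat \<Rightarrow> complex mat" where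
  "ext1 c M = mat (Suc (dim_row M)) (Suc (dim_col M))
     (\<lambda>(i,j). if i = 0 \<and> j = 0 then c else if i = 0 \<or> j = 0 then 0 else M $$ (i - 1, j - 1))"

lemma ext1_carrier[simp]: "M \<in> carrier_mat m k \<Longrightarrow> ext1 c M \<in> carrier_mat (Suc m) (Suc k)"
  unfolding carrier_mat_def ext1_def by simp

lemma ext1_dims[simp]: "dim_row (ext1 c M) = Suc (dim_row M)" "dim_col (ext1 c M) = Suc (dim_col M)"
  unfolding ext1_def by simp_all

lemma ext1_index: "i < Suc (dim_row M) \<Longrightarrow> j < Suc (dim_col M) \<Longrightarrow>
   ext1 c M $$ (i,j) = (if i = 0 \<and> j = 0 then c else if i = 0 \<or> j = 0 then 0 else M $$ (i - 1, j - 1))"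
  unfolding ext1_def by simp

lemma ext1_mult: assumes M: "M \<in> carrier_mat m k" and N: "N \<in> carrier_mat k l"
  shows "ext1 a M * ext1 b N = ext1 (a * b) (M * N)"
proof (rule eq_matI)
  fix i j assume ij: "i < dim_row (ext1 (a * b) (M * N))" "j < dim_col (ext1 (a * b) (M * N))"
  then have i: "i < Suc m" and j: "j < Suc l" using M N by simp_all
  have "(ext1 a M * ext1 b N) $$ (i,j) = (\<Sum>t<Suc k. ext1 a M $$ (i,t) * ext1 b N $$ (t,j))"
    using i j M N by (simp add: scalar_prod_def row_def col_def atLeast0LessThan)
  also have "\<dots> = ext1 a M $$ (i,0) * ext1 b N $$ (0,j) + (\<Sum>t<k. ext1 a M $$ (i,Suc t) * ext1 b N $$ (Suc t,j))"
    by (rule sum.lessThan_Suc_shift)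
  also have "\<dots> = ext1 (a * b) (M * N) $$ (i, j)"
  proof (cases i)
    case 0
    then show ?thesis using i j M N by (cases j) (simp_all add: ext1_index)
  next
    case (Suc i')
    then show ?thesis using i j M N
      by (cases j) (simp_all add: ext1_index scalar_prod_def row_def col_def atLeast0LessThan)
  qed
  finally show "(ext1 a M * ext1 b N) $$ (i,j) = ext1 (a * b) (M * N) $$ (i, j)" .
qed (use M N in simp_all)

lemma adj_ext1: "adj (ext1 c M) = ext1 (cnj c) (adj M)"
  by (rule eq_matI) (auto simp: ext1_index)

lemma ext1_one: "ext1 1 (1\<^sub>m m) = 1\<^sub>m (Suc m)"
  by (rule eq_matI) (auto simp: ext1_index)

definition diagm :: "nat \<Rightarrow> (nat \<Rightarrow> real) \<Rightarrow> complex mat" where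
  "diagm n f = mat n n (\<lambda>(i,j). if i = j then complex_of_real (f i) else 0)"

lemma diagm_carrier[simp]: "diagm n f \<in> carrier_mat n n"
  unfolding diagm_def carrier_mat_def by simp

lemma diagm_dims[simp]: "dim_row (diagm n f) = n" "dim_col (diagm n f) = n"
  unfolding diagm_def by simp_all

lemma diagm_index[simp]: "i < n \<Longrightarrow> j < n \<Longrightarrow> diagm n f $$ (i,j) = (if i = j then complex_of_real (f i) else 0)"
  unfolding diagm_def by simp

lemma ext1_diagm: "ext1 (complex_of_real e) (diagm m f) = diagm (Suc m) (\<lambda>i. if i = 0 then e else f (i - 1))"
  by (rule eq_matI) (auto simp: ext1_index)

definition unitary :: "nat \<Rightarrow> complex mat \<Rightarrow> bool" where
  "unitary n U \<longleftrightarrow> U \<in> carrier_mat n n \<and> adj U * U = 1\<^sub>m n \<and> U * adj U = 1\<^sub>m n"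

lemma unitaryI: assumes "U \<in> carrier_mat n n" "adj U * U = 1\<^sub>m n" shows "unitary n U"
  unfolding unitary_def using assms mat_mult_left_right_inverse[of "adj U" n U] by simp

lemma unitary_mult: assumes U: "unitary n U" and V: "unitary n V" shows "unitary n (U * V)"
proof (rule unitaryI)
  have Uc: "U \<in> carrier_mat n n" and Vc: "V \<in> carrier_mat n n" using U V unfolding unitary_def by simp_all
  show "U * V \<in> carrier_mat n n" using Uc Vc by simp
  have "adj (U * V) * (U * V) = adj V * adj U * (U * V)" using Uc Vc by (simp add: adj_mult)
  also have "\<dots> = adj V * (adj U * (U * V))"
    by (rule assoc_mult_mat[OF adj_carrier[OF Vc] adj_carrier[OF Uc] mult_carrier_mat[OF Uc Vc]])
  also have "\<dots> = adj V * ((adj U * U) * V)"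
    using assoc_mult_mat[OF adj_carrier[OF Uc] Uc Vc] by simp
  also have "\<dots> = 1\<^sub>m n" using U Vc V unfolding unitary_def by (simp add: left_mult_one_mat[OF Vc])
  finally show "adj (U * V) * (U * V) = 1\<^sub>m n" .
qed

lemma unitary_ext1: assumes "unitary m U" shows "unitary (Suc m) (ext1 1 U)"
proof (rule unitaryI)
  have Uc: "U \<in> carrier_mat m m" using assms unfolding unitary_def by simp
  show "ext1 1 U \<in> carrier_mat (Suc m) (Suc m)" using Uc by simp
  show "adj (ext1 1 U) * ext1 1 U = 1\<^sub>m (Suc m)"
    using assms Uc unfolding unitary_def by (simp add: adj_ext1 ext1_mult[OF adj_carrier[OF Uc] Uc] ext1_one)
qed



lemma spectral_step_basis:
  fixes v :: "complex vec"
  assumes v: "v \<in> carrier_vec n" "v \<noteq> 0\<^sub>v n" and n: "n > 0"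
  shows "\<exists>ws. set ws \<subseteq> carrier_vec n \<and> corthogonal ws \<and> length ws = n \<and> ws ! 0 = v"
proof -
  interpret cof_vec_space n "TYPE(complex)" .
  define b where "b = basis_completion v"
  from basis_completion[OF v(1) v(2), folded b_def]
  have b: "set b \<subseteq> carrier_vec n" "distinct b" "\<not> lin_dep (set b)" "length b = n" "hd b = v"
    by auto
  define ws where "ws = gram_schmidt n b"
  from gram_schmidt_result[OF b(1) b(2) b(3) ws_def]
  have ws: "corthogonal ws" "set ws \<subseteq> carrier_vec n" "length ws = length b" by auto
  from b(4,5) n obtain vs where bv: "b = v # vs" by (cases b) auto
  have "hd ws = v" unfolding ws_def bv using gram_schmidt_hd[OF v(1)] by simp
  moreover have "ws \<noteq> []" using ws(3) b(4) n by auto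
  ultimately have "ws ! 0 = v" by (cases ws) auto
  then show ?thesis using ws b(4) by auto
qed

lemma orthonormal_from_orthogonal:
  assumes ws: "set ws \<subseteq> carrier_vec n" "corthogonal ws" "length ws = n"
  shows "\<exists>U c. unitary n U \<and> (\<forall>k<n. \<forall>j<n. U $$ (k,j) = c j * ws ! j $ k)"
proof -
  define c where "c j = complex_of_real (1 / sqrt (Re (ws!j \<bullet>c ws!j)))" for j
  define U where "U = mat n n (\<lambda>(k,j). c j * ws ! j $ k)"
  have wc: "ws ! j \<in> carrier_vec n" if "j < n" for j using ws that by auto
  have nrm: "cnj (c j) * c j * (ws ! j \<bullet>c ws ! j) = 1" if j: "j < n" for j
  proof -
    have ge: "ws ! j \<bullet>c ws ! j \<ge> 0" by (rule conjugate_square_ge_0_vec)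
    have ne: "ws ! j \<bullet>c ws ! j \<noteq> 0" using corthogonalD[OF ws(2), of j j] ws(3) j by simp
    define r where "r = Re (ws ! j \<bullet>c ws ! j)"
    have eq: "ws ! j \<bullet>c ws ! j = complex_of_real r"
      using ge unfolding r_def by (simp add: less_eq_complex_def complex_eq_iff)
    have r: "r > 0" using ge ne eq by (auto simp: less_eq_complex_def)
    have "cnj (c j) * c j * (ws ! j \<bullet>c ws ! j) = complex_of_real ((1 / sqrt r) * (1 / sqrt r) * r)"
      unfolding eq c_def r_def[symmetric] by (simp only: complex_cnj_complex_of_real of_real_mult Re_complex_of_real)
    also have "(1 / sqrt r) * (1 / sqrt r) * r = r / (sqrt r * sqrt r)" by simp
    also have "sqrt r * sqrt r = r" using r by (simp add: real_sqrt_mult_self)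
    also have "r / r = 1" using r by simp
    finally show ?thesis by simp
  qed
  have Uc: "U \<in> carrier_mat n n" unfolding U_def carrier_mat_def by simp
  have "adj U * U = 1\<^sub>m n"
  proof (rule eq_matI)
    fix i j assume "i < dim_row (1\<^sub>m n)" "j < dim_col (1\<^sub>m n)"
    then have i: "i < n" and j: "j < n" by simp_all
    have "(adj U * U) $$ (i,j) = (\<Sum>k<n. cnj (c i * ws ! i $ k) * (c j * ws ! j $ k))"
      using i j Uc by (simp add: scalar_prod_def row_def col_def atLeast0LessThan U_def)
    also have "\<dots> = cnj (c i) * c j * (ws ! j \<bullet>c ws ! i)"
      using wc[OF i] wc[OF j]
      by (simp add: scalar_prod_def atLeast0LessThan sum_distrib_left mult_ac)
    also have "\<dots> = 1\<^sub>m n $$ (i,j)"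
    proof (cases "i = j")
      case True then show ?thesis using nrm[OF i] i by simp
    next
      case False
      then have "ws ! j \<bullet>c ws ! i = 0" using corthogonalD[OF ws(2), of j i] ws(3) i j by simp
      then show ?thesis using False i j by simp
    qed
    finally show "(adj U * U) $$ (i,j) = 1\<^sub>m n $$ (i,j)" .
  qed (use Uc in simp_all)
  then have "unitary n U" using unitaryI Uc by blast
  moreover have "\<forall>k<n. \<forall>j<n. U $$ (k,j) = c j * ws ! j $ k" unfolding U_def by simp
  ultimately show ?thesis by blast
qed



lemma exists_eigenvector:
  fixes A :: "complex mat"
  assumes A: "A \<in> carrier_mat n n" and n: "n > 0"
  shows "\<exists>a v. v \<in> carrier_vec n \<and> v \<noteq> 0\<^sub>v n \<and> A *\<^sub>v v = a \<cdot>\<^sub>v v"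
proof -
  obtain as where cp: "char_poly A = (\<Prod>a\<leftarrow>as. [:- a, 1:])" "length as = n"
    using char_poly_factorized[OF A] by auto
  then obtain a as' where as: "as = a # as'" using n by (cases as) auto
  have "poly (char_poly A) a = 0" using cp(1) unfolding as by simp
  then have "eigenvalue A a" using eigenvalue_root_char_poly[OF A] by simp
  then obtain v where "eigenvector A v a" unfolding eigenvalue_def by auto
  then show ?thesis unfolding eigenvector_def using A by auto
qed

lemma spectral:
  "A \<in> carrier_mat n n \<Longrightarrow> adj A = A \<Longrightarrow> \<exists>U f. unitary n U \<and> A = U * diagm n f * adj U"
proof (induction n arbitrary: A)
  case 0
  have "unitary 0 (1\<^sub>m 0)" unfolding unitary_def by simp
  moreover have "A = 1\<^sub>m 0 * diagm 0 (\<lambda>_. 0) * adj (1\<^sub>m 0)"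
    by (rule eq_matI) (use 0 in simp_all)
  ultimately show ?case by blast
next
  case (Suc m)
  define n where "n = Suc m"
  have A: "A \<in> carrier_mat n n" and herm: "adj A = A" using Suc.prems unfolding n_def by auto
  obtain a v where v: "v \<in> carrier_vec n" "v \<noteq> 0\<^sub>v n" and Av: "A *\<^sub>v v = a \<cdot>\<^sub>v v"
    using exists_eigenvector[OF A] unfolding n_def by auto
  obtain ws where ws: "set ws \<subseteq> carrier_vec n" "corthogonal ws" "length ws = n" "ws ! 0 = v"
    using spectral_step_basis[OF v] unfolding n_def by auto
  obtain U0 c where U0: "unitary n U0" and U0i: "\<And>k j. k < n \<Longrightarrow> j < n \<Longrightarrow> U0 $$ (k,j) = c j * ws ! j $ k"
    using orthonormal_from_orthogonal[OF ws(1-3)] by auto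
  have U0c: "U0 \<in> carrier_mat n n" and U0u: "adj U0 * U0 = 1\<^sub>m n" "U0 * adj U0 = 1\<^sub>m n"
    using U0 unfolding unitary_def by auto
  have aU0c: "adj U0 \<in> carrier_mat n n" using U0c by simp
  have n0: "0 < n" unfolding n_def by simp
  have col0: "col U0 0 = c 0 \<cdot>\<^sub>v v"
    by (rule eq_vecI) (use U0c v ws(4) n0 U0i in simp_all)
  have colAU0: "col (A * U0) 0 = a \<cdot>\<^sub>v col U0 0"
  proof -
    have "col (A * U0) 0 = A *\<^sub>v col U0 0" by (rule col_mult2[OF A U0c n0])
    also have "\<dots> = A *\<^sub>v (c 0 \<cdot>\<^sub>v v)" unfolding col0 ..
    also have "\<dots> = c 0 \<cdot>\<^sub>v (A *\<^sub>v v)" by (rule mult_mat_vec[OF A v(1)])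
    also have "\<dots> = c 0 \<cdot>\<^sub>v (a \<cdot>\<^sub>v v)" unfolding Av ..
    also have "\<dots> = a \<cdot>\<^sub>v (c 0 \<cdot>\<^sub>v v)" by (rule eq_vecI) (use v in \<open>simp_all add: mult_ac\<close>)
    also have "\<dots> = a \<cdot>\<^sub>v col U0 0" unfolding col0 ..
    finally show ?thesis .
  qed
  define A' where "A' = adj U0 * A * U0"
  have A'c: "A' \<in> carrier_mat n n" unfolding A'_def by (rule mult_carrier_mat[OF mult_carrier_mat[OF aU0c A] U0c])
  have A'assoc: "A' = adj U0 * (A * U0)" unfolding A'_def by (rule assoc_mult_mat[OF aU0c A U0c])
  have AU0c: "A * U0 \<in> carrier_mat n n" by (rule mult_carrier_mat[OF A U0c])
  have A'herm: "adj A' = A'"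
  proof -
    have "adj A' = adj (A * U0) * adj (adj U0)"
      unfolding A'assoc by (rule adj_mult[OF aU0c AU0c])
    also have "\<dots> = adj U0 * adj A * U0" using adj_mult[OF A U0c] by simp
    finally show ?thesis unfolding herm A'_def .
  qed
  have A'col: "A' $$ (i,0) = (if i = 0 then a else 0)" if i: "i < n" for i
  proof -
    have "A' $$ (i,0) = row (adj U0) i \<bullet> col (A * U0) 0"
      unfolding A'assoc using i n0 A U0c by simp
    also have "\<dots> = a * (row (adj U0) i \<bullet> col U0 0)"
      unfolding colAU0 using U0c by simp
    also have "row (adj U0) i \<bullet> col U0 0 = (adj U0 * U0) $$ (i,0)"
      using i n0 U0c by simp
    finally show ?thesis unfolding U0u using i n0 by simp
  qed
  have A'row: "A' $$ (0,j) = (if j = 0 then cnj a else 0)" if j: "j < n" for j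
  proof -
    have "A' $$ (0,j) = adj A' $$ (0,j)" using A'herm by simp
    also have "\<dots> = cnj (A' $$ (j,0))" using j n0 A'c by simp
    finally show ?thesis using A'col[OF j] by simp
  qed
  have areal: "a = complex_of_real (Re a)"
  proof -
    have "a = cnj a" using A'col[OF n0] A'row[OF n0] by simp
    then show ?thesis by (simp add: complex_eq_iff)
  qed
  define A3 where "A3 = mat m m (\<lambda>(i,j). A' $$ (Suc i, Suc j))"
  have A3c: "A3 \<in> carrier_mat m m" unfolding A3_def carrier_mat_def by simp
  have A3herm: "adj A3 = A3"
  proof (rule eq_matI)
    fix i j assume "i < dim_row A3" "j < dim_col A3"
    then have i: "i < m" and j: "j < m" using A3c by auto
    have "adj A3 $$ (i,j) = cnj (A' $$ (Suc j, Suc i))" using i j unfolding A3_def by simp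
    also have "\<dots> = adj A' $$ (Suc i, Suc j)" using i j A'c unfolding n_def by simp
    finally show "adj A3 $$ (i,j) = A3 $$ (i,j)" using A'herm i j unfolding A3_def by simp
  qed (use A3c in simp_all)
  obtain U3 f3 where U3: "unitary m U3" and A3eq: "A3 = U3 * diagm m f3 * adj U3"
    using Suc.IH[OF A3c A3herm] by auto
  have U3c: "U3 \<in> carrier_mat m m" using U3 unfolding unitary_def by simp
  have A'ext: "A' = ext1 a A3"
  proof (rule eq_matI)
    fix i j assume "i < dim_row (ext1 a A3)" "j < dim_col (ext1 a A3)"
    then have i: "i < n" and j: "j < n" using A3c unfolding n_def by auto
    show "A' $$ (i,j) = ext1 a A3 $$ (i,j)"
    proof (cases "i = 0 \<or> j = 0")
      case True
      then show ?thesis using A'col[OF i] A'row[OF j] i j A3c areal unfolding n_def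
        by (auto simp: ext1_index)
    next
      case False
      then show ?thesis using i j A3c unfolding n_def A3_def by (auto simp: ext1_index)
    qed
  qed (use A'c A3c n_def in simp_all)
  define U1 where "U1 = ext1 1 U3"
  have U1: "unitary n U1" unfolding U1_def n_def by (rule unitary_ext1[OF U3])
  have U1c: "U1 \<in> carrier_mat n n" using U1 unfolding unitary_def by simp
  define f where "f i = (if i = 0 then Re a else f3 (i - 1))" for i
  have Dext: "diagm n f = ext1 a (diagm m f3)"
    unfolding n_def f_def using ext1_diagm[of "Re a" m f3] areal by simp
  have A'eq: "A' = U1 * diagm n f * adj U1"
  proof -
    have "U1 * diagm n f * adj U1 = ext1 1 U3 * ext1 a (diagm m f3) * ext1 1 (adj U3)"
      unfolding U1_def Dext adj_ext1 by simp
    also have "\<dots> = ext1 a (U3 * diagm m f3 * adj U3)"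
      using U3c by (simp add: ext1_mult[OF U3c diagm_carrier] ext1_mult[OF mult_carrier_mat[OF U3c diagm_carrier] adj_carrier[OF U3c]])
    finally show ?thesis unfolding A'ext A3eq by simp
  qed
  note assoc = assoc_mult_mat[of _ n n _ n _ n] mult_carrier_mat[of _ n n _ n]
  have Dc: "diagm n f \<in> carrier_mat n n" by simp
  have aU1c: "adj U1 \<in> carrier_mat n n" using U1c by simp
  have "A = (U0 * adj U0) * A * (U0 * adj U0)" unfolding U0u using A by simp
  also have "\<dots> = U0 * A' * adj U0" unfolding A'_def
    using U0c aU0c A by (simp add: assoc)
  also have "\<dots> = (U0 * U1) * diagm n f * adj (U0 * U1)"
    unfolding A'eq adj_mult[OF U0c U1c]
    using U0c aU0c U1c aU1c Dc by (simp add: assoc)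
  finally have "A = (U0 * U1) * diagm n f * adj (U0 * U1)" .
  moreover have "unitary n (U0 * U1)" by (rule unitary_mult[OF U0 U1])
  ultimately show ?case unfolding n_def by blast
qed



lemma ip_sum: assumes "a \<in> carrier_vec n" "b \<in> carrier_vec n"
  shows "conjugate a \<bullet> b = (\<Sum>i<n. cnj (a $ i) * b $ i)"
  using assms by (simp add: scalar_prod_def atLeast0LessThan)

lemma diagm_mult_vec: assumes "w \<in> carrier_vec n"
  shows "diagm n f *\<^sub>v w = vec n (\<lambda>i. complex_of_real (f i) * w $ i)"
proof (rule eq_vecI)
  fix i assume "i < dim_vec (vec n (\<lambda>i. complex_of_real (f i) * w $ i))"
  then have i: "i < n" by simp
  have "(diagm n f *\<^sub>v w) $ i = (\<Sum>j\<in>{0..<n}. (if i = j then complex_of_real (f i) else 0) * w $ j)"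
    using i assms by (simp add: scalar_prod_def row_def)
  also have "\<dots> = (\<Sum>j\<in>{0..<n}. if i = j then complex_of_real (f i) * w $ j else 0)"
    by (rule sum.cong) auto
  also have "\<dots> = complex_of_real (f i) * w $ i" using i by simp
  finally show "(diagm n f *\<^sub>v w) $ i = vec n (\<lambda>i. complex_of_real (f i) * w $ i) $ i" using i by simp
qed (use assms in simp)

lemma diagm_mult: "diagm n f * diagm n g = diagm n (\<lambda>i. f i * g i)"
proof (rule eq_matI)
  fix i j assume "i < dim_row (diagm n (\<lambda>i. f i * g i))" "j < dim_col (diagm n (\<lambda>i. f i * g i))"
  then have i: "i < n" and j: "j < n" by simp_all
  have "(diagm n f * diagm n g) $$ (i,j) = (\<Sum>k\<in>{0..<n}. (if i = k then complex_of_real (f i) else 0) * (if k = j then complex_of_real (g k) else 0))"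
    using i j by (simp add: scalar_prod_def row_def col_def)
  also have "\<dots> = (\<Sum>k\<in>{0..<n}. if k = i then (if i = j then complex_of_real (f i * g i) else 0) else 0)"
    by (rule sum.cong) auto
  also have "\<dots> = diagm n (\<lambda>i. f i * g i) $$ (i,j)" using i j by simp
  finally show "(diagm n f * diagm n g) $$ (i,j) = diagm n (\<lambda>i. f i * g i) $$ (i,j)" .
qed simp_all

lemma adj_diagm[simp]: "adj (diagm n f) = diagm n f"
  by (rule eq_matI) auto

lemma quad_diag: assumes w: "w \<in> carrier_vec n"
  shows "conjugate w \<bullet> (diagm n f *\<^sub>v w) = complex_of_real (\<Sum>i<n. f i * (cmod (w $ i))\<^sup>2)"
proof -
  have "conjugate w \<bullet> (diagm n f *\<^sub>v w) = (\<Sum>i<n. cnj (w $ i) * (complex_of_real (f i) * w $ i))"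
    using w by (simp add: ip_sum diagm_mult_vec)
  also have "\<dots> = (\<Sum>i<n. complex_of_real (f i * (cmod (w $ i))\<^sup>2))"
  proof (rule sum.cong)
    fix i
    have "cnj (w $ i) * w $ i = complex_of_real ((cmod (w $ i))\<^sup>2)"
      by (metis complex_norm_square mult.commute)
    then show "cnj (w $ i) * (complex_of_real (f i) * w $ i) = complex_of_real (f i * (cmod (w $ i))\<^sup>2)"
      by (simp add: mult_ac)
  qed simp
  finally show ?thesis by simp
qed

lemma unitary_carrier: "unitary n U \<Longrightarrow> U \<in> carrier_mat n n"
  unfolding unitary_def by simp

lemma adjU_col: assumes U: "unitary n U" and i: "i < n"
  shows "adj U *\<^sub>v col U i = unit_vec n i"
proof -
  have Uc: "U \<in> carrier_mat n n" using U unitary_carrier by blast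
  have "adj U *\<^sub>v col U i = col (adj U * U) i"
    using col_mult2[OF adj_carrier[OF Uc] Uc i] by simp
  also have "\<dots> = unit_vec n i" using U i unfolding unitary_def by simp
  finally show ?thesis .
qed

lemma U_unit: assumes U: "unitary n U" and i: "i < n"
  shows "U *\<^sub>v unit_vec n i = col U i"
proof -
  have Uc: "U \<in> carrier_mat n n" using U unitary_carrier by blast
  show ?thesis
  proof (rule eq_vecI)
    fix k assume "k < dim_vec (col U i)"
    then have k: "k < n" using Uc by simp
    have "(U *\<^sub>v unit_vec n i) $ k = row U k \<bullet> unit_vec n i" using k Uc by simp
    also have "\<dots> = row U k $ i" using i Uc k by (simp add: scalar_prod_right_unit)
    finally show "(U *\<^sub>v unit_vec n i) $ k = col U i $ k" using k i Uc by simp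
  qed (use Uc in simp)
qed

lemma col_norm: assumes U: "unitary n U" and i: "i < n"
  shows "conjugate (col U i) \<bullet> col U i = 1"
proof -
  have Uc: "U \<in> carrier_mat n n" using U unitary_carrier by blast
  have "conjugate (col U i) \<bullet> col U i = (adj U * U) $$ (i,i)"
    using Uc i by (simp add: scalar_prod_def row_def col_def)
  then show ?thesis using U i unfolding unitary_def by simp
qed

lemma quad_spec: assumes U: "unitary n U" and v: "v \<in> carrier_vec n"
  shows "conjugate v \<bullet> ((U * diagm n f * adj U) *\<^sub>v v) = conjugate (adj U *\<^sub>v v) \<bullet> (diagm n f *\<^sub>v (adj U *\<^sub>v v))"
proof -
  have Uc: "U \<in> carrier_mat n n" using U unitary_carrier by blast
  have "(U * diagm n f * adj U) *\<^sub>v v = U *\<^sub>v (diagm n f *\<^sub>v (adj U *\<^sub>v v))"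
    using Uc v by (simp add: assoc_mult_mat_vec[OF mult_carrier_mat[OF Uc diagm_carrier] adj_carrier[OF Uc] v]
       assoc_mult_mat_vec[OF Uc diagm_carrier[of n f] mult_mat_vec_carrier[OF adj_carrier[OF Uc] v]])
  also have "conjugate v \<bullet> \<dots> = conjugate v \<bullet> (adj (adj U) *\<^sub>v (diagm n f *\<^sub>v (adj U *\<^sub>v v)))" by simp
  also have "\<dots> = conjugate (adj U *\<^sub>v v) \<bullet> (diagm n f *\<^sub>v (adj U *\<^sub>v v))"
    by (rule inner_adj[OF adj_carrier[OF Uc] v mult_mat_vec_carrier[OF diagm_carrier mult_mat_vec_carrier[OF adj_carrier[OF Uc] v]]])
  finally show ?thesis .
qed

lemma eig_col: assumes U: "unitary n U" and i: "i < n"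
  shows "(U * diagm n f * adj U) *\<^sub>v col U i = complex_of_real (f i) \<cdot>\<^sub>v col U i"
proof -
  have Uc: "U \<in> carrier_mat n n" using U unitary_carrier by blast
  have ci: "col U i \<in> carrier_vec n" using Uc i by simp
  have "(U * diagm n f * adj U) *\<^sub>v col U i = U *\<^sub>v (diagm n f *\<^sub>v (adj U *\<^sub>v col U i))"
    using Uc by (simp add: assoc_mult_mat_vec[OF mult_carrier_mat[OF Uc diagm_carrier] adj_carrier[OF Uc] ci]
       assoc_mult_mat_vec[OF Uc diagm_carrier[of n f] mult_mat_vec_carrier[OF adj_carrier[OF Uc] ci]])
  also have "diagm n f *\<^sub>v (adj U *\<^sub>v col U i) = complex_of_real (f i) \<cdot>\<^sub>v unit_vec n i"
    unfolding adjU_col[OF U i] by (rule eq_vecI) (use i in \<open>simp_all add: diagm_mult_vec\<close>)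
  also have "U *\<^sub>v (complex_of_real (f i) \<cdot>\<^sub>v unit_vec n i) = complex_of_real (f i) \<cdot>\<^sub>v col U i"
    using mult_mat_vec[OF Uc unit_vec_carrier] U_unit[OF U i] by simp
  finally show ?thesis .
qed

lemma eig_quad: assumes U: "unitary n U" and i: "i < n"
  shows "conjugate (col U i) \<bullet> ((U * diagm n f * adj U) *\<^sub>v col U i) = complex_of_real (f i)"
proof -
  have Uc: "U \<in> carrier_mat n n" using U unitary_carrier by blast
  have ci: "col U i \<in> carrier_vec n" using Uc i by simp
  show ?thesis unfolding eig_col[OF U i] using ci col_norm[OF U i] by simp
qed

lemma spectral_psd: assumes P: "psd_mat n P"
  shows "\<exists>U f. unitary n U \<and> P = U * diagm n f * adj U \<and> (\<forall>i<n. f i \<ge> 0)"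
proof -
  have Pc: "P \<in> carrier_mat n n" and h: "adj P = P" using P unfolding psd_mat_def hermitian_mat_def by auto
  obtain U f where U: "unitary n U" and Pe: "P = U * diagm n f * adj U" using spectral[OF Pc h] by auto
  have Uc: "U \<in> carrier_mat n n" using U unitary_carrier by blast
  have "f i \<ge> 0" if i: "i < n" for i
  proof -
    have "0 \<le> Re (conjugate (col U i) \<bullet> (P *\<^sub>v col U i))"
      using P Uc i unfolding psd_mat_def by simp
    then show ?thesis unfolding Pe eig_quad[OF U i] by simp
  qed
  then show ?thesis using U Pe by blast
qed



lemma expand_aux:
  fixes x y u :: "nat \<Rightarrow> complex" and \<mu> :: real
  assumes xy: "\<And>k. k < n \<Longrightarrow> x k = y k + complex_of_real \<mu> * u k"
    and eq: "(\<Sum>k<n. cnj (x k) * x k) = (\<Sum>k<n. cnj (y k) * y k)"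
    and nu: "(\<Sum>k<n. cnj (u k) * u k) = 1"
  shows "2 * \<mu> * Re (\<Sum>k<n. cnj (u k) * y k) + \<mu>\<^sup>2 = 0"
proof -
  have "(\<Sum>k<n. cnj (x k) * x k) = (\<Sum>k<n. cnj (y k) * y k + complex_of_real \<mu> * (cnj (y k) * u k + cnj (u k) * y k) + complex_of_real (\<mu>\<^sup>2) * (cnj (u k) * u k))"
    by (rule sum.cong) (simp_all add: xy algebra_simps power2_eq_square)
  also have "\<dots> = (\<Sum>k<n. cnj (y k) * y k) + complex_of_real \<mu> * ((\<Sum>k<n. cnj (y k) * u k) + (\<Sum>k<n. cnj (u k) * y k)) + complex_of_real (\<mu>\<^sup>2) * (\<Sum>k<n. cnj (u k) * u k)"
    by (simp add: sum.distrib sum_distrib_left distrib_left)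
  finally have e: "complex_of_real \<mu> * ((\<Sum>k<n. cnj (y k) * u k) + (\<Sum>k<n. cnj (u k) * y k)) + complex_of_real (\<mu>\<^sup>2) = 0"
    using eq nu by simp
  have c: "(\<Sum>k<n. cnj (y k) * u k) = cnj (\<Sum>k<n. cnj (u k) * y k)"
    by (simp add: cnj_sum mult.commute)
  define S where "S = (\<Sum>k<n. cnj (u k) * y k)"
  have e': "complex_of_real \<mu> * (cnj S + S) + complex_of_real (\<mu>\<^sup>2) = 0"
    using e unfolding c S_def[symmetric] .
  have "Re (complex_of_real \<mu> * (cnj S + S) + complex_of_real (\<mu>\<^sup>2)) = 0" unfolding e' by simp
  then have "\<mu> * (Re S + Re S) + \<mu>\<^sup>2 = 0" by simp
  then show ?thesis unfolding S_def[symmetric] by (simp add: algebra_simps)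
qed

lemma mu_zero:
  fixes x y u :: "nat \<Rightarrow> complex" and \<mu> :: real
  assumes xy: "\<And>k. k < n \<Longrightarrow> x k = y k + complex_of_real \<mu> * u k"
    and eq: "(\<Sum>k<n. cnj (x k) * x k) = (\<Sum>k<n. cnj (y k) * y k)"
    and nu: "(\<Sum>k<n. cnj (u k) * u k) = 1"
    and p: "Re (\<Sum>k<n. cnj (u k) * x k) \<ge> 0"
    and q: "Re (\<Sum>k<n. cnj (u k) * y k) \<ge> 0"
  shows "\<mu> = 0"
proof -
  have e1: "2 * \<mu> * Re (\<Sum>k<n. cnj (u k) * y k) + \<mu>\<^sup>2 = 0" by (rule expand_aux[OF xy eq nu])
  have yx: "\<And>k. k < n \<Longrightarrow> y k = x k + complex_of_real (- \<mu>) * u k" using xy by simp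
  have e2: "2 * (- \<mu>) * Re (\<Sum>k<n. cnj (u k) * x k) + (- \<mu>)\<^sup>2 = 0" by (rule expand_aux[OF yx eq[symmetric] nu])
  define a where "a = Re (\<Sum>k<n. cnj (u k) * x k)"
  define b where "b = Re (\<Sum>k<n. cnj (u k) * y k)"
  have a: "a \<ge> 0" and b: "b \<ge> 0" using p q unfolding a_def b_def by auto
  have h1: "2 * \<mu> * b + \<mu> * \<mu> = 0" using e1 unfolding b_def[symmetric] power2_eq_square .
  have h2: "\<mu> * \<mu> - 2 * \<mu> * a = 0" using e2 unfolding a_def[symmetric] by (simp add: power2_eq_square)
  have "\<mu> * a + \<mu> * b = 0" using h1 h2 by linarith
  then have "\<mu> * (a + b) = 0" by (simp add: distrib_left)
  then have "\<mu> = 0 \<or> a + b = 0" by simp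
  then show ?thesis
  proof
    assume "a + b = 0" then have "b = 0" using a b by simp
    then show ?thesis using e1 unfolding b_def[symmetric] by simp
  qed
qed

lemma psd_herm: "psd_mat n P \<Longrightarrow> adj P = P"
  unfolding psd_mat_def hermitian_mat_def by simp

lemma psd_carrier: "psd_mat n P \<Longrightarrow> P \<in> carrier_mat n n"
  unfolding psd_mat_def by simp

lemma diagm_zero: "diagm n (\<lambda>_. 0) = 0\<^sub>m n n"
  by (rule eq_matI) auto

lemma psd_unique:
  assumes P: "psd_mat n P" and Q: "psd_mat n Q" and PQ: "P * P = Q * Q"
  shows "P = Q"
proof -
  have Pc: "P \<in> carrier_mat n n" and Qc: "Q \<in> carrier_mat n n" using P Q psd_carrier by auto
  have hP: "adj P = P" and hQ: "adj Q = Q" using P Q psd_herm by auto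
  define A where "A = P - Q"
  have Ac: "A \<in> carrier_mat n n" unfolding A_def by (rule minus_carrier_mat[OF Qc])
  have hA: "adj A = A" unfolding A_def adj_minus[OF Pc Qc] hP hQ ..
  obtain U \<mu> where U: "unitary n U" and Ae: "A = U * diagm n \<mu> * adj U" using spectral[OF Ac hA] by auto
  have Uc: "U \<in> carrier_mat n n" using U unitary_carrier by blast
  have mu0: "\<mu> i = 0" if i: "i < n" for i
  proof -
    define u where "u = col U i"
    have uc: "u \<in> carrier_vec n" unfolding u_def using Uc i by simp
    define x where "x = P *\<^sub>v u"
    define y where "y = Q *\<^sub>v u"
    have xc: "x \<in> carrier_vec n" and yc: "y \<in> carrier_vec n" unfolding x_def y_def using Pc Qc uc by auto
    have "A *\<^sub>v u = complex_of_real (\<mu> i) \<cdot>\<^sub>v u" unfolding Ae u_def by (rule eig_col[OF U i])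
    moreover have "A *\<^sub>v u = x - y" unfolding A_def x_def y_def by (rule minus_mult_distrib_mat_vec[OF Pc Qc uc])
    ultimately have xyv: "x - y = complex_of_real (\<mu> i) \<cdot>\<^sub>v u" by simp
    have xy: "x $ k = y $ k + complex_of_real (\<mu> i) * u $ k" if k: "k < n" for k
    proof -
      have "(x - y) $ k = (complex_of_real (\<mu> i) \<cdot>\<^sub>v u) $ k" unfolding xyv ..
      then have "x $ k - y $ k = complex_of_real (\<mu> i) * u $ k" using k xc yc uc by simp
      then show ?thesis by (simp add: algebra_simps)
    qed
    have xx: "conjugate x \<bullet> x = conjugate u \<bullet> ((P * P) *\<^sub>v u)"
    proof -
      have "conjugate x \<bullet> x = conjugate u \<bullet> (adj P *\<^sub>v x)"
        unfolding x_def by (rule inner_adj[OF Pc uc, symmetric]) (use xc x_def in simp)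
      then show ?thesis unfolding hP x_def using Pc uc by simp
    qed
    have yy: "conjugate y \<bullet> y = conjugate u \<bullet> ((Q * Q) *\<^sub>v u)"
    proof -
      have "conjugate y \<bullet> y = conjugate u \<bullet> (adj Q *\<^sub>v y)"
        unfolding y_def by (rule inner_adj[OF Qc uc, symmetric]) (use yc y_def in simp)
      then show ?thesis unfolding hQ y_def using Qc uc by simp
    qed
    have p: "Re (conjugate u \<bullet> x) \<ge> 0" using P uc unfolding psd_mat_def x_def by simp
    have q: "Re (conjugate u \<bullet> y) \<ge> 0" using Q uc unfolding psd_mat_def y_def by simp
    have nu: "conjugate u \<bullet> u = 1" unfolding u_def by (rule col_norm[OF U i])
    show "\<mu> i = 0"
    proof (rule mu_zero[of n "\<lambda>k. x $ k" "\<lambda>k. y $ k" "\<mu> i" "\<lambda>k. u $ k"])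
      show "\<And>k. k < n \<Longrightarrow> x $ k = y $ k + complex_of_real (\<mu> i) * u $ k" by (rule xy)
      show "(\<Sum>k<n. cnj (x $ k) * x $ k) = (\<Sum>k<n. cnj (y $ k) * y $ k)"
        using xx yy PQ xc yc by (simp add: ip_sum[symmetric])
      show "(\<Sum>k<n. cnj (u $ k) * u $ k) = 1" using nu uc by (simp add: ip_sum[symmetric])
      show "Re (\<Sum>k<n. cnj (u $ k) * x $ k) \<ge> 0" using p uc xc by (simp add: ip_sum[symmetric])
      show "Re (\<Sum>k<n. cnj (u $ k) * y $ k) \<ge> 0" using q uc yc by (simp add: ip_sum[symmetric])
    qed
  qed
  have "diagm n \<mu> = diagm n (\<lambda>_. 0)" unfolding diagm_def using mu0 by (intro eq_matI) auto
  then have "A = 0\<^sub>m n n" unfolding Ae diagm_zero using Uc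
    by (simp add: right_mult_zero_mat[OF Uc] left_mult_zero_mat[OF adj_carrier[OF Uc]])
  then have A0: "P - Q = 0\<^sub>m n n" unfolding A_def .
  show "P = Q"
  proof (rule eq_matI)
    fix i j assume "i < dim_row Q" "j < dim_col Q"
    then have i: "i < n" and j: "j < n" using Qc by auto
    have "(P - Q) $$ (i,j) = 0" unfolding A0 using i j by simp
    then show "P $$ (i,j) = Q $$ (i,j)" using i j Pc Qc by simp
  qed (use Pc Qc in simp_all)
qed

lemma psd_sqrt_eq: assumes "psd_mat (dim_row M) R" "R * R = M"
  shows "psd_sqrt M = R"
  unfolding psd_sqrt_def
proof (rule the_equality)
  show "psd_mat (dim_row M) R \<and> R * R = M" using assms by simp
  fix P assume "psd_mat (dim_row M) P \<and> P * P = M"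
  then show "P = R" using psd_unique[of "dim_row M" P R] assms by simp
qed



lemma unitary_cancel: assumes U: "unitary n U" and Z: "Z \<in> carrier_mat n m"
  shows "adj U * (U * Z) = Z"
proof -
  have Uc: "U \<in> carrier_mat n n" using U unitary_carrier by blast
  have "adj U * (U * Z) = (adj U * U) * Z" by (rule assoc_mult_mat[OF adj_carrier[OF Uc] Uc Z, symmetric])
  also have "\<dots> = Z" using U Z unfolding unitary_def by simp
  finally show ?thesis .
qed

lemma conj_carrier: "U \<in> carrier_mat n n \<Longrightarrow> U * diagm n f * adj U \<in> carrier_mat n n"
  by (rule mult_carrier_mat[OF mult_carrier_mat[OF _ diagm_carrier] adj_carrier])

lemma conj_sq: assumes U: "unitary n U"
  shows "(U * diagm n f * adj U) * (U * diagm n g * adj U) = U * diagm n (\<lambda>i. f i * g i) * adj U"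
proof -
  have Uc: "U \<in> carrier_mat n n" using U unitary_carrier by blast
  note assoc = assoc_mult_mat[of _ n n _ n _ n] mult_carrier_mat[of _ n n _ n]
  have aUc: "adj U \<in> carrier_mat n n" using Uc by simp
  have Df: "diagm n f \<in> carrier_mat n n" and Dg: "diagm n g \<in> carrier_mat n n" by simp_all
  have "(U * diagm n f * adj U) * (U * diagm n g * adj U) = U * (diagm n f * (adj U * (U * (diagm n g * adj U))))"
    using Uc aUc Df Dg by (simp add: assoc)
  also have "adj U * (U * (diagm n g * adj U)) = diagm n g * adj U"
    by (rule unitary_cancel[OF U mult_carrier_mat[OF Dg aUc]])
  also have "diagm n f * (diagm n g * adj U) = diagm n (\<lambda>i. f i * g i) * adj U"
    using assoc_mult_mat[OF Df Dg aUc] diagm_mult by simp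
  also have "U * (diagm n (\<lambda>i. f i * g i) * adj U) = U * diagm n (\<lambda>i. f i * g i) * adj U"
    using assoc_mult_mat[OF Uc diagm_carrier aUc] by simp
  finally show ?thesis .
qed

lemma mtrace_diagm: "mtrace (diagm n f) = (\<Sum>i<n. complex_of_real (f i))"
  unfolding mtrace_def by simp

lemma mtrace_conj: assumes U: "unitary n U"
  shows "mtrace (U * diagm n f * adj U) = (\<Sum>i<n. complex_of_real (f i))"
proof -
  have Uc: "U \<in> carrier_mat n n" using U unitary_carrier by blast
  have aUc: "adj U \<in> carrier_mat n n" using Uc by simp
  have DU: "diagm n f * adj U \<in> carrier_mat n n" by (rule mult_carrier_mat[OF diagm_carrier aUc])
  have "mtrace (U * diagm n f * adj U) = mtrace (U * (diagm n f * adj U))"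
    using assoc_mult_mat[OF Uc diagm_carrier aUc] by simp
  also have "\<dots> = mtrace ((diagm n f * adj U) * U)" by (rule mtrace_mult_comm[OF Uc DU])
  also have "(diagm n f * adj U) * U = diagm n f * (adj U * U)" by (rule assoc_mult_mat[OF diagm_carrier aUc Uc])
  also have "\<dots> = diagm n f" using U unfolding unitary_def by simp
  finally show ?thesis by (simp add: mtrace_diagm)
qed

lemma adj_conj: assumes Uc: "U \<in> carrier_mat n n"
  shows "adj (U * diagm n f * adj U) = U * diagm n f * adj U"
proof -
  have aUc: "adj U \<in> carrier_mat n n" using Uc by simp
  have "adj (U * diagm n f * adj U) = adj (adj U) * adj (U * diagm n f)"
    by (rule adj_mult[OF mult_carrier_mat[OF Uc diagm_carrier] aUc])
  also have "adj (U * diagm n f) = diagm n f * adj U" using adj_mult[OF Uc diagm_carrier[of n f]] by simp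
  finally show ?thesis using assoc_mult_mat[OF Uc diagm_carrier aUc] by simp
qed

lemma psd_conj: assumes U: "unitary n U" and f: "\<And>i. i < n \<Longrightarrow> f i \<ge> 0"
  shows "psd_mat n (U * diagm n f * adj U)"
proof -
  have Uc: "U \<in> carrier_mat n n" using U unitary_carrier by blast
  have "0 \<le> Re (conjugate v \<bullet> ((U * diagm n f * adj U) *\<^sub>v v))" if v: "v \<in> carrier_vec n" for v
  proof -
    have w: "adj U *\<^sub>v v \<in> carrier_vec n" by (rule mult_mat_vec_carrier[OF adj_carrier[OF Uc] v])
    have "Re (conjugate v \<bullet> ((U * diagm n f * adj U) *\<^sub>v v)) = (\<Sum>i<n. f i * (cmod ((adj U *\<^sub>v v) $ i))\<^sup>2)"
      unfolding quad_spec[OF U v] quad_diag[OF w] by simp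
    also have "\<dots> \<ge> 0" using f by (intro sum_nonneg) simp
    finally show ?thesis by simp
  qed
  then show ?thesis unfolding psd_mat_def hermitian_mat_def using conj_carrier[OF Uc] adj_conj[OF Uc] by simp
qed

lemma trace_norm_herm: assumes X: "X \<in> carrier_mat n n" and h: "adj X = X"
  shows "\<exists>U f. unitary n U \<and> X = U * diagm n f * adj U \<and> trace_norm X = (\<Sum>i<n. \<bar>f i\<bar>)"
proof -
  obtain U f where U: "unitary n U" and Xe: "X = U * diagm n f * adj U" using spectral[OF X h] by auto
  define R where "R = U * diagm n (\<lambda>i. \<bar>f i\<bar>) * adj U"
  have Rp: "psd_mat n R" unfolding R_def by (rule psd_conj[OF U]) simp
  have "R * R = U * diagm n (\<lambda>i. \<bar>f i\<bar> * \<bar>f i\<bar>) * adj U" unfolding R_def by (rule conj_sq[OF U])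
  also have "(\<lambda>i. \<bar>f i\<bar> * \<bar>f i\<bar>) = (\<lambda>i. f i * f i)" by (simp add: abs_mult_self_eq)
  also have "U * diagm n (\<lambda>i. f i * f i) * adj U = adj X * X" unfolding h unfolding Xe by (rule conj_sq[OF U, symmetric])
  finally have RR: "R * R = adj X * X" .
  have dr: "dim_row (adj X * X) = n" using X by simp
  have "psd_sqrt (adj X * X) = R" by (rule psd_sqrt_eq) (use Rp RR dr in simp_all)
  then have "trace_norm X = Re (mtrace R)" unfolding trace_norm_def by simp
  also have "\<dots> = (\<Sum>i<n. \<bar>f i\<bar>)" unfolding R_def mtrace_conj[OF U] by simp
  finally show ?thesis using U Xe by blast
qed

lemma row_adj: assumes "U \<in> carrier_mat n n" "i < n"
  shows "row (adj U) i = conjugate (col U i)"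
  by (rule eq_vecI) (use assms in auto)

lemma trace_unitary_sum: assumes U: "unitary n U" and S: "S \<in> carrier_mat n n"
  shows "(\<Sum>i<n. conjugate (col U i) \<bullet> (S *\<^sub>v col U i)) = mtrace S"
proof -
  have Uc: "U \<in> carrier_mat n n" using U unitary_carrier by blast
  have aUc: "adj U \<in> carrier_mat n n" using Uc by simp
  have SU: "S * U \<in> carrier_mat n n" using S Uc by simp
  have "mtrace S = mtrace (S * (U * adj U))" using U S unfolding unitary_def by simp
  also have "S * (U * adj U) = (S * U) * adj U" by (rule assoc_mult_mat[OF S Uc aUc, symmetric])
  also have "mtrace \<dots> = mtrace (adj U * (S * U))" by (rule mtrace_mult_comm[OF SU aUc])
  also have "\<dots> = (\<Sum>i<n. conjugate (col U i) \<bullet> (S *\<^sub>v col U i))"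
    unfolding mtrace_def using Uc S by (intro sum.cong) (simp_all add: row_adj mult_mat_vec_def)
  finally show ?thesis by simp
qed

lemma trace_norm_diff_le: assumes R1: "psd_mat n R1" and R2: "psd_mat n R2"
  shows "trace_norm (R1 - R2) \<le> Re (mtrace R1) + Re (mtrace R2)"
proof -
  have R1c: "R1 \<in> carrier_mat n n" and R2c: "R2 \<in> carrier_mat n n" using R1 R2 psd_carrier by auto
  define X where "X = R1 - R2"
  have Xc: "X \<in> carrier_mat n n" unfolding X_def by (rule minus_carrier_mat[OF R2c])
  have hX: "adj X = X" unfolding X_def adj_minus[OF R1c R2c] psd_herm[OF R1] psd_herm[OF R2] ..
  obtain U f where U: "unitary n U" and Xe: "X = U * diagm n f * adj U" and tn: "trace_norm X = (\<Sum>i<n. \<bar>f i\<bar>)"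
    using trace_norm_herm[OF Xc hX] by auto
  have Uc: "U \<in> carrier_mat n n" using U unitary_carrier by blast
  define a where "a i = Re (conjugate (col U i) \<bullet> (R1 *\<^sub>v col U i))" for i
  define b where "b i = Re (conjugate (col U i) \<bullet> (R2 *\<^sub>v col U i))" for i
  have fab: "\<bar>f i\<bar> \<le> a i + b i" if i: "i < n" for i
  proof -
    have ci: "col U i \<in> carrier_vec n" using Uc i by simp
    have a0: "a i \<ge> 0" unfolding a_def using R1 ci unfolding psd_mat_def by simp
    have b0: "b i \<ge> 0" unfolding b_def using R2 ci unfolding psd_mat_def by simp
    have "complex_of_real (f i) = conjugate (col U i) \<bullet> (X *\<^sub>v col U i)" unfolding Xe by (rule eig_quad[OF U i, symmetric])
    also have "X *\<^sub>v col U i = R1 *\<^sub>v col U i - R2 *\<^sub>v col U i" unfolding X_def by (rule minus_mult_distrib_mat_vec[OF R1c R2c ci])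
    also have "conjugate (col U i) \<bullet> \<dots> = conjugate (col U i) \<bullet> (R1 *\<^sub>v col U i) - conjugate (col U i) \<bullet> (R2 *\<^sub>v col U i)"
      by (rule scalar_prod_minus_distrib[of _ n]) (use ci R1c R2c in simp_all)
    finally have "f i = a i - b i" unfolding a_def b_def by (metis Re_complex_of_real minus_complex.simps(1))
    then show ?thesis using a0 b0 by simp
  qed
  have "trace_norm X \<le> (\<Sum>i<n. a i + b i)" unfolding tn by (rule sum_mono) (use fab in simp)
  also have "\<dots> = (\<Sum>i<n. a i) + (\<Sum>i<n. b i)" by (rule sum.distrib)
  also have "(\<Sum>i<n. a i) = Re (mtrace R1)" unfolding a_def trace_unitary_sum[OF U R1c, symmetric] by (simp add: Re_sum)
  also have "(\<Sum>i<n. b i) = Re (mtrace R2)" unfolding b_def trace_unitary_sum[OF U R2c, symmetric] by (simp add: Re_sum)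
  finally show ?thesis unfolding X_def .
qed



lemma smult_mat_vec': assumes A: "A \<in> carrier_mat n m" and v: "v \<in> carrier_vec m"
  shows "(c \<cdot>\<^sub>m A) *\<^sub>v v = c \<cdot>\<^sub>v (A *\<^sub>v v)"
proof (rule eq_vecI)
  fix i assume "i < dim_vec (c \<cdot>\<^sub>v (A *\<^sub>v v))"
  then have i: "i < n" using A by simp
  show "((c \<cdot>\<^sub>m A) *\<^sub>v v) $ i = (c \<cdot>\<^sub>v (A *\<^sub>v v)) $ i"
    using i A v by (simp add: scalar_prod_def row_def sum_distrib_left mult.assoc)
qed (use A in simp)

lemma psd_add: assumes A: "psd_mat n A" and B: "psd_mat n B" shows "psd_mat n (A + B)"
proof -
  have Ac: "A \<in> carrier_mat n n" and Bc: "B \<in> carrier_mat n n" using A B psd_carrier by auto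
  have "0 \<le> Re (conjugate v \<bullet> ((A + B) *\<^sub>v v))" if v: "v \<in> carrier_vec n" for v
  proof -
    have "(A + B) *\<^sub>v v = A *\<^sub>v v + B *\<^sub>v v" by (rule add_mult_distrib_mat_vec[OF Ac Bc v])
    then have "conjugate v \<bullet> ((A + B) *\<^sub>v v) = conjugate v \<bullet> (A *\<^sub>v v) + conjugate v \<bullet> (B *\<^sub>v v)"
      using scalar_prod_add_distrib[of "conjugate v" n "A *\<^sub>v v" "B *\<^sub>v v"] v Ac Bc by simp
    moreover have "0 \<le> Re (conjugate v \<bullet> (A *\<^sub>v v))" "0 \<le> Re (conjugate v \<bullet> (B *\<^sub>v v))"
      using A B v unfolding psd_mat_def by auto
    ultimately show ?thesis by simp
  qed
  moreover have "adj (A + B) = A + B" unfolding adj_add[OF Ac Bc] psd_herm[OF A] psd_herm[OF B] ..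
  ultimately show ?thesis unfolding psd_mat_def hermitian_mat_def using Ac Bc by simp
qed

lemma psd_smult: assumes A: "psd_mat n A" and c: "c \<ge> 0"
  shows "psd_mat n (complex_of_real c \<cdot>\<^sub>m A)"
proof -
  have Ac: "A \<in> carrier_mat n n" using A psd_carrier by auto
  have "0 \<le> Re (conjugate v \<bullet> ((complex_of_real c \<cdot>\<^sub>m A) *\<^sub>v v))" if v: "v \<in> carrier_vec n" for v
  proof -
    have "conjugate v \<bullet> ((complex_of_real c \<cdot>\<^sub>m A) *\<^sub>v v) = complex_of_real c * (conjugate v \<bullet> (A *\<^sub>v v))"
      unfolding smult_mat_vec'[OF Ac v] using v Ac by simp
    moreover have "0 \<le> Re (conjugate v \<bullet> (A *\<^sub>v v))" using A v unfolding psd_mat_def by auto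
    ultimately show ?thesis using c by simp
  qed
  moreover have "adj (complex_of_real c \<cdot>\<^sub>m A) = complex_of_real c \<cdot>\<^sub>m A" unfolding adj_smult psd_herm[OF A] by simp
  ultimately show ?thesis unfolding psd_mat_def hermitian_mat_def using Ac by simp
qed

lemma psd_congr: assumes R: "psd_mat n R" and K: "K \<in> carrier_mat n n"
  shows "psd_mat n (K * R * adj K)"
proof -
  have Rc: "R \<in> carrier_mat n n" using R psd_carrier by auto
  have aK: "adj K \<in> carrier_mat n n" using K by simp
  have KR: "K * R \<in> carrier_mat n n" by (rule mult_carrier_mat[OF K Rc])
  have C: "K * R * adj K \<in> carrier_mat n n" by (rule mult_carrier_mat[OF KR aK])
  have "0 \<le> Re (conjugate v \<bullet> ((K * R * adj K) *\<^sub>v v))" if v: "v \<in> carrier_vec n" for v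
  proof -
    have w: "adj K *\<^sub>v v \<in> carrier_vec n" by (rule mult_mat_vec_carrier[OF aK v])
    have Rw: "R *\<^sub>v (adj K *\<^sub>v v) \<in> carrier_vec n" by (rule mult_mat_vec_carrier[OF Rc w])
    have "(K * R * adj K) *\<^sub>v v = K *\<^sub>v (R *\<^sub>v (adj K *\<^sub>v v))"
      using assoc_mult_mat_vec[OF KR aK v] assoc_mult_mat_vec[OF K Rc w] by simp
    also have "K = adj (adj K)" by simp
    finally have "conjugate v \<bullet> ((K * R * adj K) *\<^sub>v v) = conjugate v \<bullet> (adj (adj K) *\<^sub>v (R *\<^sub>v (adj K *\<^sub>v v)))" by simp
    also have "\<dots> = conjugate (adj K *\<^sub>v v) \<bullet> (R *\<^sub>v (adj K *\<^sub>v v))"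
      by (rule inner_adj[OF aK v Rw])
    finally show ?thesis using R w unfolding psd_mat_def by simp
  qed
  moreover have "adj (K * R * adj K) = K * R * adj K"
  proof -
    have "adj (K * R * adj K) = adj (adj K) * adj (K * R)" by (rule adj_mult[OF KR aK])
    also have "adj (K * R) = adj R * adj K" by (rule adj_mult[OF K Rc])
    finally show ?thesis unfolding psd_herm[OF R] using assoc_mult_mat[OF K Rc aK] by simp
  qed
  ultimately show ?thesis unfolding psd_mat_def hermitian_mat_def using C by simp
qed

lemma mtrace_congr: assumes R: "R \<in> carrier_mat n n" and K: "K \<in> carrier_mat n n" and KK: "adj K * K = 1\<^sub>m n"
  shows "mtrace (K * R * adj K) = mtrace R"
proof -
  have aK: "adj K \<in> carrier_mat n n" using K by simp
  have RaK: "R * adj K \<in> carrier_mat n n" by (rule mult_carrier_mat[OF R aK])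
  have "K * R * adj K = K * (R * adj K)" by (rule assoc_mult_mat[OF K R aK])
  then have "mtrace (K * R * adj K) = mtrace ((R * adj K) * K)" using mtrace_mult_comm[OF K RaK] by simp
  also have "(R * adj K) * K = R * (adj K * K)" by (rule assoc_mult_mat[OF R aK K])
  also have "\<dots> = R" unfolding KK using R by simp
  finally show ?thesis .
qed

lemma noisy3_density:
  assumes rho: "density_mat n \<rho>"
    and K1: "K1 \<in> carrier_mat n n" "adj K1 * K1 = 1\<^sub>m n"
    and K2: "K2 \<in> carrier_mat n n" "adj K2 * K2 = 1\<^sub>m n"
    and K3: "K3 \<in> carrier_mat n n" "adj K3 * K3 = 1\<^sub>m n"
    and q: "q1 \<ge> 0" "q2 \<ge> 0" "q3 \<ge> 0" "q1 + q2 + q3 = 1"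
  shows "density_mat n (noisy3 q1 q2 q3 K1 K2 K3 \<rho>)"
proof -
  have R: "psd_mat n \<rho>" and tr: "mtrace \<rho> = 1" using rho unfolding density_mat_def by auto
  have Rc: "\<rho> \<in> carrier_mat n n" using R psd_carrier by auto
  have c1: "K1 * \<rho> * adj K1 \<in> carrier_mat n n" using psd_congr[OF R K1(1)] psd_carrier by blast
  have c2: "K2 * \<rho> * adj K2 \<in> carrier_mat n n" using psd_congr[OF R K2(1)] psd_carrier by blast
  have c3: "K3 * \<rho> * adj K3 \<in> carrier_mat n n" using psd_congr[OF R K3(1)] psd_carrier by blast
  have "psd_mat n (noisy3 q1 q2 q3 K1 K2 K3 \<rho>)" unfolding noisy3_def
    by (intro psd_add psd_smult psd_congr R K1(1) K2(1) K3(1) q(1-3))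
  moreover have "mtrace (noisy3 q1 q2 q3 K1 K2 K3 \<rho>) = 1"
  proof -
    have "mtrace (noisy3 q1 q2 q3 K1 K2 K3 \<rho>) =
      complex_of_real q1 * mtrace (K1 * \<rho> * adj K1) + complex_of_real q2 * mtrace (K2 * \<rho> * adj K2)
      + complex_of_real q3 * mtrace (K3 * \<rho> * adj K3)"
      unfolding noisy3_def using c1 c2 c3
      by (simp add: mtrace_add[of _ n] mtrace_smult[of _ n])
    also have "\<dots> = complex_of_real (q1 + q2 + q3)"
      using mtrace_congr[OF Rc K1] mtrace_congr[OF Rc K2] mtrace_congr[OF Rc K3] tr by simp
    finally show ?thesis using q(4) by simp
  qed
  ultimately show ?thesis unfolding density_mat_def by simp
qed

lemma trace_norm_orth: assumes A: "psd_mat n A" and B: "psd_mat n B" and AB: "A * B = 0\<^sub>m n n"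
  shows "trace_norm (A - B) = Re (mtrace A) + Re (mtrace B)"
proof -
  have Ac: "A \<in> carrier_mat n n" and Bc: "B \<in> carrier_mat n n" using A B psd_carrier by auto
  have BA: "B * A = 0\<^sub>m n n"
  proof -
    have "adj (A * B) = adj B * adj A" by (rule adj_mult[OF Ac Bc])
    then have "B * A = adj (0\<^sub>m n n)" unfolding AB psd_herm[OF A] psd_herm[OF B] by simp
    also have "adj (0\<^sub>m n n) = 0\<^sub>m n n" by (rule eq_matI) auto
    finally show ?thesis .
  qed
  have hm: "adj (A - B) = A - B" unfolding adj_minus[OF Ac Bc] psd_herm[OF A] psd_herm[OF B] ..
  have sq: "adj (A - B) * (A - B) = (A + B) * (A + B)"
  proof (rule eq_matI)
    fix i j assume "i < dim_row ((A + B) * (A + B))" "j < dim_col ((A + B) * (A + B))"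
    then have i: "i < n" and j: "j < n" using Ac Bc by auto
    have ab: "(\<Sum>k<n. A $$ (i,k) * B $$ (k,j)) = 0"
      using arg_cong[OF AB, of "\<lambda>M. M $$ (i,j)"] i j Ac Bc by (simp add: scalar_prod_def row_def col_def atLeast0LessThan)
    have ba: "(\<Sum>k<n. B $$ (i,k) * A $$ (k,j)) = 0"
      using arg_cong[OF BA, of "\<lambda>M. M $$ (i,j)"] i j Ac Bc by (simp add: scalar_prod_def row_def col_def atLeast0LessThan)
    have "(adj (A - B) * (A - B)) $$ (i,j) = (\<Sum>k<n. (A $$ (i,k) - B $$ (i,k)) * (A $$ (k,j) - B $$ (k,j)))"
      unfolding hm using i j Ac Bc by (simp add: scalar_prod_def row_def col_def atLeast0LessThan)
    also have "\<dots> = (\<Sum>k<n. (A $$ (i,k) + B $$ (i,k)) * (A $$ (k,j) + B $$ (k,j))) - 2 * ((\<Sum>k<n. A $$ (i,k) * B $$ (k,j)) + (\<Sum>k<n. B $$ (i,k) * A $$ (k,j)))"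
      by (simp add: sum_subtractf sum.distrib sum_distrib_left algebra_simps)
    also have "\<dots> = ((A + B) * (A + B)) $$ (i,j)"
      unfolding ab ba using i j Ac Bc by (simp add: scalar_prod_def row_def col_def atLeast0LessThan)
    finally show "(adj (A - B) * (A - B)) $$ (i,j) = ((A + B) * (A + B)) $$ (i,j)" .
  qed (use Ac Bc in simp_all)
  have dr: "dim_row (adj (A - B) * (A - B)) = n" using Ac Bc by simp
  have "psd_sqrt (adj (A - B) * (A - B)) = A + B"
    by (rule psd_sqrt_eq) (use psd_add[OF A B] sq dr in simp_all)
  then have "trace_norm (A - B) = Re (mtrace (A + B))" unfolding trace_norm_def by simp
  also have "\<dots> = Re (mtrace A) + Re (mtrace B)" using mtrace_add[OF Ac Bc] by simp
  finally show ?thesis .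
qed



lemma sum_split: fixes k l :: nat and g :: "nat \<Rightarrow> 'a::comm_monoid_add" shows "(\<Sum>t<k*l. g t) = (\<Sum>s<k. \<Sum>r<l. g (s*l + r))"
proof -
  have "(\<Sum>t<k*l. g t) = (\<Sum>s<k. sum g {s*l..<s*l+l})" by (rule sum.nat_group[symmetric])
  also have "\<dots> = (\<Sum>s<k. \<Sum>r<l. g (s*l + r))"
    by (rule sum.cong) (simp_all add: sum.atLeastLessThan_shift_0 atLeast0LessThan)
  finally show ?thesis .
qed

lemma kron_carrier: "A \<in> carrier_mat a a' \<Longrightarrow> B \<in> carrier_mat b b' \<Longrightarrow> kron A B \<in> carrier_mat (a*b) (a'*b')"
  unfolding kron_def carrier_mat_def by simp

lemma kron_index: assumes "A \<in> carrier_mat a a'" "B \<in> carrier_mat b b'" "i < a*b" "j < a'*b'"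
  shows "kron A B $$ (i,j) = A $$ (i div b, j div b') * B $$ (i mod b, j mod b')"
  using assms unfolding kron_def carrier_mat_def by simp

lemma kron_mult: assumes A: "A \<in> carrier_mat a k" and C: "C \<in> carrier_mat k c"
  and B: "B \<in> carrier_mat b l" and D: "D \<in> carrier_mat l e" and b: "b > 0" and l: "l > 0" and e: "e > 0"
  shows "kron A B * kron C D = kron (A * C) (B * D)"
proof (rule eq_matI)
  fix i j assume "i < dim_row (kron (A * C) (B * D))" "j < dim_col (kron (A * C) (B * D))"
  then have i: "i < a*b" and j: "j < c*e" using A B C D by (auto simp: kron_def)
  have id: "i div b < a" "i mod b < b" using i b by (auto simp: less_mult_imp_div_less)
  have jd: "j div e < c" "j mod e < e" using j e by (auto simp: less_mult_imp_div_less)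
  have "(kron A B * kron C D) $$ (i,j) = (\<Sum>t<k*l. kron A B $$ (i,t) * kron C D $$ (t,j))"
    using i j A B C D by (simp add: kron_def scalar_prod_def row_def col_def atLeast0LessThan)
  also have "\<dots> = (\<Sum>s<k. \<Sum>r<l. kron A B $$ (i,s*l+r) * kron C D $$ (s*l+r,j))" by (rule sum_split)
  also have "\<dots> = (\<Sum>s<k. \<Sum>r<l. (A $$ (i div b, s) * C $$ (s, j div e)) * (B $$ (i mod b, r) * D $$ (r, j mod e)))"
  proof (intro sum.cong refl)
    fix s r assume s: "s \<in> {..<k}" and r: "r \<in> {..<l}"
    have t: "s*l + r < k*l" using s r
    proof -
      have "Suc s * l \<le> k * l" using s by (intro mult_le_mono1) simp
      then show ?thesis using r by simp
    qed
    have dv: "(s*l+r) div l = s" "(s*l+r) mod l = r" using r l by auto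
    show "kron A B $$ (i,s*l+r) * kron C D $$ (s*l+r,j) = (A $$ (i div b, s) * C $$ (s, j div e)) * (B $$ (i mod b, r) * D $$ (r, j mod e))"
      using kron_index[OF A B i t] kron_index[OF C D t j] dv by (simp add: mult_ac)
  qed
  also have "\<dots> = (\<Sum>s<k. A $$ (i div b, s) * C $$ (s, j div e)) * (\<Sum>r<l. B $$ (i mod b, r) * D $$ (r, j mod e))"
    by (simp add: sum_product)
  also have "\<dots> = (A * C) $$ (i div b, j div e) * (B * D) $$ (i mod b, j mod e)"
    using id jd A B C D by (simp add: scalar_prod_def row_def col_def atLeast0LessThan)
  also have "\<dots> = kron (A * C) (B * D) $$ (i,j)"
    by (rule kron_index[OF mult_carrier_mat[OF A C] mult_carrier_mat[OF B D] i j, symmetric])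
  finally show "(kron A B * kron C D) $$ (i,j) = kron (A * C) (B * D) $$ (i,j)" .
qed (use A B C D in \<open>simp_all add: kron_def\<close>)

lemma kron_adj: assumes A: "A \<in> carrier_mat a a'" and B: "B \<in> carrier_mat b b'" and b: "b > 0" and b': "b' > 0"
  shows "adj (kron A B) = kron (adj A) (adj B)"
proof (rule eq_matI)
  fix i j assume "i < dim_row (kron (adj A) (adj B))" "j < dim_col (kron (adj A) (adj B))"
  then have i: "i < a'*b'" and j: "j < a*b" using A B by (auto simp: kron_def)
  have id: "i div b' < a'" "i mod b' < b'" using i b' by (auto simp: less_mult_imp_div_less)
  have jd: "j div b < a" "j mod b < b" using j b by (auto simp: less_mult_imp_div_less)
  have "adj (kron A B) $$ (i,j) = cnj (kron A B $$ (j,i))" using i j A B by (simp add: kron_def)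
  also have "\<dots> = cnj (A $$ (j div b, i div b') * B $$ (j mod b, i mod b'))" using kron_index[OF A B j i] by simp
  also have "\<dots> = kron (adj A) (adj B) $$ (i,j)"
    using kron_index[OF adj_carrier[OF A] adj_carrier[OF B] i j] id jd A B by simp
  finally show "adj (kron A B) $$ (i,j) = kron (adj A) (adj B) $$ (i,j)" .
qed (use A B in \<open>simp_all add: kron_def\<close>)

lemma kron_one: assumes b: "b > 0" shows "kron (1\<^sub>m a) (1\<^sub>m b) = 1\<^sub>m (a*b)"
proof (rule eq_matI)
  fix i j assume "i < dim_row (1\<^sub>m (a*b))" "j < dim_col (1\<^sub>m (a*b))"
  then have i: "i < a*b" and j: "j < a*b" by auto
  have id: "i div b < a" "i mod b < b" using i b by (auto simp: less_mult_imp_div_less)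
  have jd: "j div b < a" "j mod b < b" using j b by (auto simp: less_mult_imp_div_less)
  have "(i div b = j div b \<and> i mod b = j mod b) \<longleftrightarrow> i = j" by (metis div_mult_mod_eq)
  then show "kron (1\<^sub>m a) (1\<^sub>m b) $$ (i,j) = 1\<^sub>m (a*b) $$ (i,j)"
    using kron_index[OF one_carrier_mat one_carrier_mat i j] id jd i j by auto
qed (simp_all add: kron_def)

lemma kron_unitary: assumes L: "L \<in> carrier_mat 3 3" "adj L * L = 1\<^sub>m 3" and d: "d > 0"
  shows "kron L (1\<^sub>m d) \<in> carrier_mat (3*d) (3*d)" "adj (kron L (1\<^sub>m d)) * kron L (1\<^sub>m d) = 1\<^sub>m (3*d)"
proof -
  show "kron L (1\<^sub>m d) \<in> carrier_mat (3*d) (3*d)" by (rule kron_carrier[OF L(1) one_carrier_mat])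
  have "adj (kron L (1\<^sub>m d)) * kron L (1\<^sub>m d) = kron (adj L) (1\<^sub>m d) * kron L (1\<^sub>m d)"
    using kron_adj[OF L(1) one_carrier_mat d d] by simp
  also have "\<dots> = kron (adj L * L) (1\<^sub>m d * 1\<^sub>m d)"
    by (rule kron_mult[OF adj_carrier[OF L(1)] L(1) one_carrier_mat one_carrier_mat d d d])
  also have "\<dots> = 1\<^sub>m (3*d)" using L(2) kron_one[OF d, of 3] by simp
  finally show "adj (kron L (1\<^sub>m d)) * kron L (1\<^sub>m d) = 1\<^sub>m (3*d)" .
qed



lemma less3: "(i::nat) < 3 \<Longrightarrow> i = 0 \<or> i = 1 \<or> i = 2" by auto

lemma sum3: "(\<Sum>k\<in>{0..<3::nat}. f k) = f 0 + f 1 + f 2"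
  by (simp add: eval_nat_numeral atLeast0LessThan)

lemma unit3: assumes "L = mat_of_rows_list 3 rs" "length rs = 3"
  "\<And>i j. i < 3 \<Longrightarrow> j < 3 \<Longrightarrow> (\<Sum>k\<in>{0..<3::nat}. cnj (rs ! k ! i) * rs ! k ! j) = (if i = j then 1 else 0)"
  shows "L \<in> carrier_mat 3 3" "adj L * L = 1\<^sub>m 3"
proof -
  show Lc: "L \<in> carrier_mat 3 3" using assms(1,2) unfolding mat_of_rows_list_def carrier_mat_def by simp
  show "adj L * L = 1\<^sub>m 3"
  proof (rule eq_matI)
    fix i j assume "i < dim_row (1\<^sub>m 3)" "j < dim_col (1\<^sub>m 3)"
    then have i: "i < 3" and j: "j < 3" by auto
    have "(adj L * L) $$ (i,j) = (\<Sum>k\<in>{0..<3::nat}. cnj (L $$ (k,i)) * L $$ (k,j))"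
      using i j Lc by (simp add: scalar_prod_def row_def col_def)
    also have "\<dots> = (\<Sum>k\<in>{0..<3::nat}. cnj (rs ! k ! i) * rs ! k ! j)"
      using i j assms(1,2) by (intro sum.cong) (auto simp: mat_of_rows_list_def)
    finally show "(adj L * L) $$ (i,j) = 1\<^sub>m 3 $$ (i,j)" using assms(3)[OF i j] i j by simp
  qed (use Lc in simp_all)
qed

lemma L1u: "L1 \<in> carrier_mat 3 3" "adj L1 * L1 = 1\<^sub>m 3"
  by (rule unit3[OF L1_def], simp, simp only: sum3, auto dest!: less3)+
lemma L2u: "L2 \<in> carrier_mat 3 3" "adj L2 * L2 = 1\<^sub>m 3"
  by (rule unit3[OF L2_def], simp, simp only: sum3, auto dest!: less3)+
lemma L3u: "L3 \<in> carrier_mat 3 3" "adj L3 * L3 = 1\<^sub>m 3"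
  by (rule unit3[OF L3_def], simp, simp only: sum3, auto dest!: less3)+
lemma S1u: "S1 \<in> carrier_mat 3 3" "adj S1 * S1 = 1\<^sub>m 3"
  by (rule unit3[OF S1_def], simp, simp only: sum3, auto dest!: less3)+
lemma S2u: "S2 \<in> carrier_mat 3 3" "adj S2 * S2 = 1\<^sub>m 3"
  by (rule unit3[OF S2_def], simp, simp only: sum3, auto dest!: less3)+
lemma S3u: "S3 \<in> carrier_mat 3 3" "adj S3 * S3 = 1\<^sub>m 3"
  by (rule unit3[OF S3_def], simp, simp only: sum3, auto dest!: less3)+

lemma single_le:
  assumes q: "0 \<le> q1" "0 \<le> q2" "0 \<le> q3" "q1 + q2 + q3 = 1" and rho: "density_mat 3 \<rho>"
  shows "psucc_single q1 q2 q3 \<rho> \<le> 1"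
proof -
  have A: "density_mat 3 (chanL q1 q2 q3 \<rho>)" unfolding chanL_def
    by (rule noisy3_density[OF rho L1u L2u L3u q])
  have B: "density_mat 3 (chanS q1 q2 q3 \<rho>)" unfolding chanS_def
    by (rule noisy3_density[OF rho S1u S2u S3u q])
  have "trace_norm (chanL q1 q2 q3 \<rho> - chanS q1 q2 q3 \<rho>) \<le> 2"
    using trace_norm_diff_le[of 3 "chanL q1 q2 q3 \<rho>" "chanS q1 q2 q3 \<rho>"] A B
    unfolding density_mat_def by simp
  then show ?thesis unfolding psucc_single_def by simp
qed

lemma bip_le:
  assumes q: "0 \<le> q1" "0 \<le> q2" "0 \<le> q3" "q1 + q2 + q3 = 1" and d: "d > 0" and rho: "density_mat (3*d) \<rho>"
  shows "psucc_bip q1 q2 q3 d \<rho> \<le> 1"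
proof -
  have A: "density_mat (3*d) (chanL_ext q1 q2 q3 d \<rho>)" unfolding chanL_ext_def
    by (rule noisy3_density[OF rho kron_unitary[OF L1u d] kron_unitary[OF L2u d] kron_unitary[OF L3u d] q])
  have B: "density_mat (3*d) (chanS_ext q1 q2 q3 d \<rho>)" unfolding chanS_ext_def
    by (rule noisy3_density[OF rho kron_unitary[OF S1u d] kron_unitary[OF S2u d] kron_unitary[OF S3u d] q])
  have "trace_norm (chanL_ext q1 q2 q3 d \<rho> - chanS_ext q1 q2 q3 d \<rho>) \<le> 2"
    using trace_norm_diff_le[of "3*d" "chanL_ext q1 q2 q3 d \<rho>" "chanS_ext q1 q2 q3 d \<rho>"] A B
    unfolding density_mat_def by simp
  then show ?thesis unfolding psucc_bip_def by simp
qed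



definition psi :: "complex vec" where
  "psi = vec 9 (\<lambda>i. [1/2, 1/2, 0, 1/3, -1/3, 1/3, -1/6, 1/6, 1/3] ! i)"

lemma psi_carrier: "psi \<in> carrier_vec 9" unfolding psi_def by simp

lemma sum9: "(\<Sum>k<9::nat. f k) = f 0 + f 1 + f 2 + f 3 + f 4 + f 5 + f 6 + f 7 + f 8"
  by (simp add: eval_nat_numeral)

lemma psi_norm: "normalized_vec 9 psi"
  unfolding normalized_vec_def using psi_carrier by (simp add: sum9 psi_def norm_divide power_divide)

lemma sum3': "(\<Sum>k<3::nat. f k) = f 0 + f 1 + f 2"
  by (simp add: eval_nat_numeral)

lemma kron3_vec: assumes L: "L \<in> carrier_mat 3 3" and v: "v \<in> carrier_vec 9" and i: "i < 9"
  shows "(kron L (1\<^sub>m 3) *\<^sub>v v) $ i = L $$ (i div 3, 0) * v $ (i mod 3) + L $$ (i div 3, 1) * v $ (3 + i mod 3) + L $$ (i div 3, 2) * v $ (6 + i mod 3)"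
proof -
  have Kc: "kron L (1\<^sub>m 3) \<in> carrier_mat 9 9" using kron_carrier[OF L one_carrier_mat[of 3]] by simp
  have "(kron L (1\<^sub>m 3) *\<^sub>v v) $ i = (\<Sum>t<3*3. kron L (1\<^sub>m 3) $$ (i,t) * v $ t)"
    using Kc v i by (simp add: scalar_prod_def row_def atLeast0LessThan)
  also have "\<dots> = (\<Sum>s<3. \<Sum>r<3. kron L (1\<^sub>m 3) $$ (i,s*3+r) * v $ (s*3+r))" by (rule sum_split)
  also have "\<dots> = (\<Sum>s<3. \<Sum>r<3. L $$ (i div 3, s) * ((if i mod 3 = r then 1 else 0) * v $ (s*3+r)))"
  proof (intro sum.cong refl)
    fix s r assume s: "s \<in> {..<3::nat}" and r: "r \<in> {..<3::nat}"
    have t: "s*3+r < 3*3" using s r by auto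
    have i': "i < 3*3" using i by simp
    show "kron L (1\<^sub>m 3) $$ (i,s*3+r) * v $ (s*3+r) = L $$ (i div 3, s) * ((if i mod 3 = r then 1 else 0) * v $ (s*3+r))"
      using kron_index[OF L one_carrier_mat i' t] r s i by auto
  qed
  also have "\<dots> = L $$ (i div 3, 0) * v $ (i mod 3) + L $$ (i div 3, 1) * v $ (3 + i mod 3) + L $$ (i div 3, 2) * v $ (6 + i mod 3)"
  proof -
    have m: "i mod 3 < 3" by simp
    have "(\<Sum>s<3. \<Sum>r<3. L $$ (i div 3, s) * ((if i mod 3 = r then 1 else 0) * v $ (s*3+r)))
        = (\<Sum>s<3::nat. L $$ (i div 3, s) * v $ (s*3 + i mod 3))"
    proof (rule sum.cong[OF refl])
      fix s :: nat
      have "(\<Sum>r<3. L $$ (i div 3, s) * ((if i mod 3 = r then 1 else 0) * v $ (s*3+r)))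
          = (\<Sum>r<3. if i mod 3 = r then L $$ (i div 3, s) * v $ (s*3+r) else 0)"
        by (intro sum.cong refl) simp
      also have "\<dots> = L $$ (i div 3, s) * v $ (s*3 + i mod 3)"
        by (subst sum.delta') (simp_all only: finite_lessThan lessThan_iff m if_True)
      finally show "(\<Sum>r<3. L $$ (i div 3, s) * ((if i mod 3 = r then 1 else 0) * v $ (s*3+r)))
          = L $$ (i div 3, s) * v $ (s*3 + i mod 3)" .
    qed
    also have "\<dots> = L $$ (i div 3, 0) * v $ (i mod 3) + L $$ (i div 3, 1) * v $ (3 + i mod 3) + L $$ (i div 3, 2) * v $ (6 + i mod 3)"
      unfolding sum3' by simp
    finally show ?thesis .
  qed
  finally show ?thesis .
qed



lemma orth_L1_S1: "(\<Sum>m<9. cnj ((kron L1 (1\<^sub>m 3) *\<^sub>v psi) $ m) * (kron S1 (1\<^sub>m 3) *\<^sub>v psi) $ m) = 0"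
  unfolding sum9
  by (simp add: kron3_vec[OF L1u(1) psi_carrier] kron3_vec[OF S1u(1) psi_carrier])
     (simp add: L1_def S1_def mat_of_rows_list_def psi_def)

lemma orth_L1_S2: "(\<Sum>m<9. cnj ((kron L1 (1\<^sub>m 3) *\<^sub>v psi) $ m) * (kron S2 (1\<^sub>m 3) *\<^sub>v psi) $ m) = 0"
  unfolding sum9
  by (simp add: kron3_vec[OF L1u(1) psi_carrier] kron3_vec[OF S2u(1) psi_carrier])
     (simp add: L1_def S2_def mat_of_rows_list_def psi_def)

lemma orth_L1_S3: "(\<Sum>m<9. cnj ((kron L1 (1\<^sub>m 3) *\<^sub>v psi) $ m) * (kron S3 (1\<^sub>m 3) *\<^sub>v psi) $ m) = 0"
  unfolding sum9
  by (simp add: kron3_vec[OF L1u(1) psi_carrier] kron3_vec[OF S3u(1) psi_carrier])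
     (simp add: L1_def S3_def mat_of_rows_list_def psi_def)

lemma orth_L2_S1: "(\<Sum>m<9. cnj ((kron L2 (1\<^sub>m 3) *\<^sub>v psi) $ m) * (kron S1 (1\<^sub>m 3) *\<^sub>v psi) $ m) = 0"
  unfolding sum9
  by (simp add: kron3_vec[OF L2u(1) psi_carrier] kron3_vec[OF S1u(1) psi_carrier])
     (simp add: L2_def S1_def mat_of_rows_list_def psi_def)

lemma orth_L2_S2: "(\<Sum>m<9. cnj ((kron L2 (1\<^sub>m 3) *\<^sub>v psi) $ m) * (kron S2 (1\<^sub>m 3) *\<^sub>v psi) $ m) = 0"
  unfolding sum9
  by (simp add: kron3_vec[OF L2u(1) psi_carrier] kron3_vec[OF S2u(1) psi_carrier])
     (simp add: L2_def S2_def mat_of_rows_list_def psi_def)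

lemma orth_L2_S3: "(\<Sum>m<9. cnj ((kron L2 (1\<^sub>m 3) *\<^sub>v psi) $ m) * (kron S3 (1\<^sub>m 3) *\<^sub>v psi) $ m) = 0"
  unfolding sum9
  by (simp add: kron3_vec[OF L2u(1) psi_carrier] kron3_vec[OF S3u(1) psi_carrier])
     (simp add: L2_def S3_def mat_of_rows_list_def psi_def)

lemma orth_L3_S1: "(\<Sum>m<9. cnj ((kron L3 (1\<^sub>m 3) *\<^sub>v psi) $ m) * (kron S1 (1\<^sub>m 3) *\<^sub>v psi) $ m) = 0"
  unfolding sum9
  by (simp add: kron3_vec[OF L3u(1) psi_carrier] kron3_vec[OF S1u(1) psi_carrier])
     (simp add: L3_def S1_def mat_of_rows_list_def psi_def)

lemma orth_L3_S2: "(\<Sum>m<9. cnj ((kron L3 (1\<^sub>m 3) *\<^sub>v psi) $ m) * (kron S2 (1\<^sub>m 3) *\<^sub>v psi) $ m) = 0"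
  unfolding sum9
  by (simp add: kron3_vec[OF L3u(1) psi_carrier] kron3_vec[OF S2u(1) psi_carrier])
     (simp add: L3_def S2_def mat_of_rows_list_def psi_def)

lemma orth_L3_S3: "(\<Sum>m<9. cnj ((kron L3 (1\<^sub>m 3) *\<^sub>v psi) $ m) * (kron S3 (1\<^sub>m 3) *\<^sub>v psi) $ m) = 0"
  unfolding sum9
  by (simp add: kron3_vec[OF L3u(1) psi_carrier] kron3_vec[OF S3u(1) psi_carrier])
     (simp add: L3_def S3_def mat_of_rows_list_def psi_def)


lemma proj_index: "i < dim_vec v \<Longrightarrow> j < dim_vec v \<Longrightarrow> proj v $$ (i,j) = v $ i * cnj (v $ j)"
  unfolding proj_def by simp

lemma proj_carrier: "v \<in> carrier_vec n \<Longrightarrow> proj v \<in> carrier_mat n n"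
  unfolding proj_def carrier_mat_def carrier_vec_def by simp

lemma proj_density: assumes v: "normalized_vec n v" shows "density_mat n (proj v)"
proof -
  have vc: "v \<in> carrier_vec n" and nv: "(\<Sum>i<n. (cmod (v $ i))\<^sup>2) = 1" using v unfolding normalized_vec_def by auto
  have dv: "dim_vec v = n" using vc by simp
  have Pc: "proj v \<in> carrier_mat n n" by (rule proj_carrier[OF vc])
  have herm: "adj (proj v) = proj v"
    by (rule eq_matI) (use Pc dv in \<open>auto simp: proj_index\<close>)
  have quad: "0 \<le> Re (conjugate w \<bullet> (proj v *\<^sub>v w))" if w: "w \<in> carrier_vec n" for w
  proof -
    define s where "s = (\<Sum>m<n. cnj (v $ m) * w $ m)"
    have pw: "(proj v *\<^sub>v w) $ i = v $ i * s" if i: "i < n" for i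
      using i Pc dv w unfolding s_def
      by (simp add: scalar_prod_def row_def proj_index atLeast0LessThan sum_distrib_left mult.assoc)
    have "conjugate w \<bullet> (proj v *\<^sub>v w) = (\<Sum>i<n. cnj (w $ i) * (v $ i * s))"
      using w Pc pw by (simp add: ip_sum)
    also have "\<dots> = s * (\<Sum>i<n. cnj (w $ i) * v $ i)" by (simp add: sum_distrib_left mult_ac)
    also have "s * (\<Sum>i<n. cnj (w $ i) * v $ i) = s * cnj s" unfolding s_def by (simp add: cnj_sum mult.commute)
    also have "\<dots> = complex_of_real ((cmod s)\<^sup>2)" by (rule complex_norm_square[symmetric])
    finally show ?thesis by simp
  qed
  have tr: "mtrace (proj v) = 1"
  proof -
    have "mtrace (proj v) = (\<Sum>i<n. complex_of_real ((cmod (v $ i))\<^sup>2))"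
      unfolding mtrace_def using Pc dv by (intro sum.cong) (simp_all add: proj_index complex_norm_square del: of_real_power)
    also have "\<dots> = complex_of_real (\<Sum>i<n. (cmod (v $ i))\<^sup>2)" by (rule of_real_sum[symmetric])
    also have "\<dots> = 1" unfolding nv by simp
    finally show ?thesis .
  qed
  show ?thesis unfolding density_mat_def psd_mat_def hermitian_mat_def using Pc herm quad tr by simp
qed

lemma congr_proj: assumes K: "K \<in> carrier_mat n n" and v: "v \<in> carrier_vec n"
  shows "K * proj v * adj K = proj (K *\<^sub>v v)"
proof -
  have dv: "dim_vec v = n" using v by simp
  have Pc: "proj v \<in> carrier_mat n n" by (rule proj_carrier[OF v])
  have KP: "K * proj v = mat n n (\<lambda>(i,m). (K *\<^sub>v v) $ i * cnj (v $ m))"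
  proof (rule eq_matI)
    fix i m assume "i < dim_row (mat n n (\<lambda>(i,m). (K *\<^sub>v v) $ i * cnj (v $ m)))" "m < dim_col (mat n n (\<lambda>(i,m). (K *\<^sub>v v) $ i * cnj (v $ m)))"
    then have i: "i < n" and m: "m < n" by auto
    show "(K * proj v) $$ (i,m) = mat n n (\<lambda>(i,m). (K *\<^sub>v v) $ i * cnj (v $ m)) $$ (i,m)"
      using i m K Pc dv v by (simp add: scalar_prod_def row_def col_def proj_index sum_distrib_right mult.assoc)
  qed (use K Pc in simp_all)
  show ?thesis
  proof (rule eq_matI)
    fix i l assume "i < dim_row (proj (K *\<^sub>v v))" "l < dim_col (proj (K *\<^sub>v v))"
    then have i: "i < n" and l: "l < n" using K unfolding proj_def by auto
    have "(K * proj v * adj K) $$ (i,l) = (\<Sum>m<n. ((K *\<^sub>v v) $ i * cnj (v $ m)) * cnj (K $$ (l,m)))"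
      unfolding KP using i l K by (simp add: scalar_prod_def row_def col_def atLeast0LessThan)
    also have "\<dots> = (K *\<^sub>v v) $ i * cnj (\<Sum>m<n. K $$ (l,m) * v $ m)"
      by (simp add: cnj_sum sum_distrib_left mult_ac)
    also have "(\<Sum>m<n. K $$ (l,m) * v $ m) = (K *\<^sub>v v) $ l"
      using l K v by (simp add: scalar_prod_def row_def atLeast0LessThan)
    finally show "(K * proj v * adj K) $$ (i,l) = proj (K *\<^sub>v v) $$ (i,l)"
      using i l K by (simp add: proj_index)
  qed (use K in \<open>simp_all add: proj_def\<close>)
qed

lemma noisy_proj: assumes K1: "K1 \<in> carrier_mat n n" and K2: "K2 \<in> carrier_mat n n" and K3: "K3 \<in> carrier_mat n n"
  and v: "v \<in> carrier_vec n"
  shows "noisy3 q1 q2 q3 K1 K2 K3 (proj v) = mat n n (\<lambda>(i,m). \<Sum>j<3. complex_of_real ([q1,q2,q3] ! j) *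
      (([K1 *\<^sub>v v, K2 *\<^sub>v v, K3 *\<^sub>v v] ! j) $ i * cnj (([K1 *\<^sub>v v, K2 *\<^sub>v v, K3 *\<^sub>v v] ! j) $ m)))"
proof -
  have c1: "K1 *\<^sub>v v \<in> carrier_vec n" "K2 *\<^sub>v v \<in> carrier_vec n" "K3 *\<^sub>v v \<in> carrier_vec n"
    using K1 K2 K3 v by auto
  have d: "dim_row K1 = n" "dim_row K2 = n" "dim_row K3 = n" using K1 K2 K3 by auto
  show ?thesis unfolding noisy3_def congr_proj[OF K1 v] congr_proj[OF K2 v] congr_proj[OF K3 v]
    by (rule eq_matI) (use c1 d in \<open>simp_all add: sum3' proj_def\<close>)
qed

lemma prod_zero: fixes a b :: "nat \<Rightarrow> complex vec" and c d :: "nat \<Rightarrow> complex"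
  assumes orth: "\<And>j k. j < 3 \<Longrightarrow> k < 3 \<Longrightarrow> (\<Sum>m<n. cnj (a j $ m) * b k $ m) = 0"
  shows "mat n n (\<lambda>(i,m). \<Sum>j<3. c j * (a j $ i * cnj (a j $ m))) * mat n n (\<lambda>(m,l). \<Sum>k<3. d k * (b k $ m * cnj (b k $ l))) = 0\<^sub>m n n"
proof (rule eq_matI)
  fix i l assume "i < dim_row (0\<^sub>m n n :: complex mat)" "l < dim_col (0\<^sub>m n n :: complex mat)"
  then have i: "i < n" and l: "l < n" by auto
  have "(mat n n (\<lambda>(i,m). \<Sum>j<3. c j * (a j $ i * cnj (a j $ m))) * mat n n (\<lambda>(m,l). \<Sum>k<3. d k * (b k $ m * cnj (b k $ l)))) $$ (i,l)
     = (\<Sum>m<n. (\<Sum>j<3. c j * (a j $ i * cnj (a j $ m))) * (\<Sum>k<3. d k * (b k $ m * cnj (b k $ l))))"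
    using i l by (simp add: scalar_prod_def row_def col_def atLeast0LessThan)
  also have "\<dots> = (\<Sum>m<n. \<Sum>j<3. \<Sum>k<3. (c j * d k * a j $ i * cnj (b k $ l)) * (cnj (a j $ m) * b k $ m))"
    by (simp add: sum_product mult_ac)
  also have "\<dots> = (\<Sum>j<3. \<Sum>m<n. \<Sum>k<3. (c j * d k * a j $ i * cnj (b k $ l)) * (cnj (a j $ m) * b k $ m))"
    by (rule sum.swap[where A="{..<n}" and B="{..<3::nat}"])
  also have "\<dots> = (\<Sum>j<3. \<Sum>k<3. \<Sum>m<n. (c j * d k * a j $ i * cnj (b k $ l)) * (cnj (a j $ m) * b k $ m))"
    by (rule sum.cong[OF refl]) (rule sum.swap[where A="{..<n}" and B="{..<3::nat}"])
  also have "\<dots> = (\<Sum>j<3. \<Sum>k<3. (c j * d k * a j $ i * cnj (b k $ l)) * (\<Sum>m<n. cnj (a j $ m) * b k $ m))"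
    by (simp add: sum_distrib_left)
  also have "\<dots> = 0" using orth by simp
  finally show "(mat n n (\<lambda>(i,m). \<Sum>j<3. c j * (a j $ i * cnj (a j $ m))) * mat n n (\<lambda>(m,l). \<Sum>k<3. d k * (b k $ m * cnj (b k $ l)))) $$ (i,l) = 0\<^sub>m n n $$ (i,l)"
    using i l by simp
qed simp_all



lemma psi_bip: assumes q: "0 \<le> q1" "0 \<le> q2" "0 \<le> q3" "q1 + q2 + q3 = 1"
  shows "psucc_bip q1 q2 q3 3 (proj psi) = 1"
proof -
  have d3: "(3::nat) > 0" by simp
  have rho: "density_mat 9 (proj psi)" by (rule proj_density[OF psi_norm])
  have KL1: "kron L1 (1\<^sub>m 3) \<in> carrier_mat 9 9" "adj (kron L1 (1\<^sub>m 3)) * kron L1 (1\<^sub>m 3) = 1\<^sub>m 9"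
    using kron_unitary[OF L1u d3] by simp_all
  have KL2: "kron L2 (1\<^sub>m 3) \<in> carrier_mat 9 9" "adj (kron L2 (1\<^sub>m 3)) * kron L2 (1\<^sub>m 3) = 1\<^sub>m 9"
    using kron_unitary[OF L2u d3] by simp_all
  have KL3: "kron L3 (1\<^sub>m 3) \<in> carrier_mat 9 9" "adj (kron L3 (1\<^sub>m 3)) * kron L3 (1\<^sub>m 3) = 1\<^sub>m 9"
    using kron_unitary[OF L3u d3] by simp_all
  have KS1: "kron S1 (1\<^sub>m 3) \<in> carrier_mat 9 9" "adj (kron S1 (1\<^sub>m 3)) * kron S1 (1\<^sub>m 3) = 1\<^sub>m 9"
    using kron_unitary[OF S1u d3] by simp_all
  have KS2: "kron S2 (1\<^sub>m 3) \<in> carrier_mat 9 9" "adj (kron S2 (1\<^sub>m 3)) * kron S2 (1\<^sub>m 3) = 1\<^sub>m 9"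
    using kron_unitary[OF S2u d3] by simp_all
  have KS3: "kron S3 (1\<^sub>m 3) \<in> carrier_mat 9 9" "adj (kron S3 (1\<^sub>m 3)) * kron S3 (1\<^sub>m 3) = 1\<^sub>m 9"
    using kron_unitary[OF S3u d3] by simp_all
  define A where "A = chanL_ext q1 q2 q3 3 (proj psi)"
  define B where "B = chanS_ext q1 q2 q3 3 (proj psi)"
  have Ad: "density_mat 9 A" unfolding A_def chanL_ext_def
    by (rule noisy3_density[OF rho KL1 KL2 KL3 q])
  have Bd: "density_mat 9 B" unfolding B_def chanS_ext_def
    by (rule noisy3_density[OF rho KS1 KS2 KS3 q])
  define a where "a = (\<lambda>j. [kron L1 (1\<^sub>m 3) *\<^sub>v psi, kron L2 (1\<^sub>m 3) *\<^sub>v psi, kron L3 (1\<^sub>m 3) *\<^sub>v psi] ! j)"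
  define b where "b = (\<lambda>j. [kron S1 (1\<^sub>m 3) *\<^sub>v psi, kron S2 (1\<^sub>m 3) *\<^sub>v psi, kron S3 (1\<^sub>m 3) *\<^sub>v psi] ! j)"
  define c where "c = (\<lambda>j. complex_of_real ([q1,q2,q3] ! j))"
  have Ae: "A = mat 9 9 (\<lambda>(i,m). \<Sum>j<3. c j * (a j $ i * cnj (a j $ m)))"
    unfolding A_def chanL_ext_def a_def c_def by (rule noisy_proj[OF KL1(1) KL2(1) KL3(1) psi_carrier])
  have Be: "B = mat 9 9 (\<lambda>(i,m). \<Sum>j<3. c j * (b j $ i * cnj (b j $ m)))"
    unfolding B_def chanS_ext_def b_def c_def by (rule noisy_proj[OF KS1(1) KS2(1) KS3(1) psi_carrier])
  have orth: "(\<Sum>m<9. cnj (a j $ m) * b k $ m) = 0" if j: "j < 3" and k: "k < 3" for j k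
    using less3[OF j] less3[OF k] unfolding a_def b_def
    by (elim disjE) (simp_all add: orth_L1_S1 orth_L1_S2 orth_L1_S3 orth_L2_S1 orth_L2_S2 orth_L2_S3
        orth_L3_S1 orth_L3_S2 orth_L3_S3)
  have AB: "A * B = 0\<^sub>m 9 9" unfolding Ae Be by (rule prod_zero[OF orth])
  have "trace_norm (A - B) = Re (mtrace A) + Re (mtrace B)"
    by (rule trace_norm_orth[OF _ _ AB]) (use Ad Bd in \<open>simp_all add: density_mat_def\<close>)
  also have "\<dots> = 2" using Ad Bd unfolding density_mat_def by simp
  finally show ?thesis unfolding psucc_bip_def A_def B_def by simp
qed

lemma psi_not_product: "\<not> product_vec33 psi"
proof
  assume "product_vec33 psi"
  then obtain x y where xy: "x \<in> carrier_vec 3" "y \<in> carrier_vec 3" "psi = vec 9 (\<lambda>k. x $ (k div 3) * y $ (k mod 3))"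
    unfolding product_vec33_def by auto
  have e0: "psi $ 0 = x $ 0 * y $ 0" using arg_cong[OF xy(3), of "\<lambda>w. w $ 0"] by simp
  have e5: "psi $ 5 = x $ 1 * y $ 2" using arg_cong[OF xy(3), of "\<lambda>w. w $ 5"] by simp
  have e2: "psi $ 2 = x $ 0 * y $ 2" using arg_cong[OF xy(3), of "\<lambda>w. w $ 2"] by simp
  have e3: "psi $ 3 = x $ 1 * y $ 0" using arg_cong[OF xy(3), of "\<lambda>w. w $ 3"] by simp
  have "psi $ 0 * psi $ 5 = psi $ 2 * psi $ 3" unfolding e0 e5 e2 e3 by (simp add: mult_ac)
  then show False unfolding psi_def by simp
qed

lemma psi_not_max: "\<not> max_entangled33 psi"
proof
  assume "max_entangled33 psi"
  then have "ptrace_B 3 3 (proj psi) $$ (0,0) = ((1/3) \<cdot>\<^sub>m 1\<^sub>m 3) $$ (0,0)"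
    unfolding max_entangled33_def by simp
  moreover have "ptrace_B 3 3 (proj psi) $$ (0,0) = 1/2"
    unfolding ptrace_B_def using psi_carrier by (simp add: sum3' proj_index) (simp add: psi_def)
  ultimately show False by simp
qed

theorem theorem8:
  fixes q1 q2 q3 :: real
  assumes "0 < q1" "q1 < 1" "0 < q2" "q2 < 1" "0 < q3" "q3 < 1"
    and "q1 + q2 + q3 = 1"
  shows "\<exists>\<psi>. normalized_vec 9 \<psi> \<and> entangled_pure33 \<psi> \<and> \<not> max_entangled33 \<psi> \<and>
     (\<forall>\<rho>. density_mat 3 \<rho> \<longrightarrow> psucc_single q1 q2 q3 \<rho> \<le> psucc_bip q1 q2 q3 3 (proj \<psi>)) \<and>
     (\<forall>d \<rho>. 0 < d \<longrightarrow> density_mat (3 * d) \<rho> \<longrightarrow>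
        psucc_bip q1 q2 q3 d \<rho> \<le> psucc_bip q1 q2 q3 3 (proj \<psi>))"
proof (intro exI conjI allI impI)
  have q: "0 \<le> q1" "0 \<le> q2" "0 \<le> q3" "q1 + q2 + q3 = 1" using assms by auto
  show "normalized_vec 9 psi" by (rule psi_norm)
  show "entangled_pure33 psi" unfolding entangled_pure33_def using psi_norm psi_not_product by simp
  show "\<not> max_entangled33 psi" by (rule psi_not_max)
  fix \<rho> :: "complex mat"
  assume "density_mat 3 \<rho>"
  then show "psucc_single q1 q2 q3 \<rho> \<le> psucc_bip q1 q2 q3 3 (proj psi)"
    using single_le[OF q] psi_bip[OF q] by simp
next
  have q: "0 \<le> q1" "0 \<le> q2" "0 \<le> q3" "q1 + q2 + q3 = 1" using assms by auto
  fix d :: nat and \<rho> :: "complex mat"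
  assume "0 < d" "density_mat (3 * d) \<rho>"
  then show "psucc_bip q1 q2 q3 d \<rho> \<le> psucc_bip q1 q2 q3 3 (proj psi)"
    using bip_le[OF q] psi_bip[OF q] by simp
qed


end
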